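(* Let $\phi:Z\to[-\infty,+\infty]$ be proper and closed and suppose Assumptions (A1) and (A2) hold for some $\lambda\in\mathbb R$. Then for every $z\in Z$ and $\tau\in(0,1/\lambda^-)$, $|\partial\phi|(J_\tau z)\le\frac{\mathsf d_Z(J_\tau z,z)}{\tau}\le\frac1{1+\lambda\tau}|\partial\phi|(z)$. In particular $J_\tau z\in D(|\partial\phi|)$.
   Context: $(X,\mathsf d_X)$, $(Y,\mathsf d_Y)$ complete metric spaces; $Z=X\times Y$ with $\mathsf d_Z=(\mathsf d_X^2+\mathsf d_Y^2)^{1/2}$. $D_X\phi=\{x:\phi(x,y)<+\infty\ \forall y\}$, $D_Y\phi=\{y:\phi(x,y)>-\infty\ \forall x\}$, $D\phi=D_X\phi\times D_Y\phi$; proper: $D\phi\ne\emptyset$; closed: for $x\in D_X\phi$, $y\mapsto\phi(x,y)$ upper semicontinuous, for $y\in D_Y\phi$, $x\mapsto\phi(x,y)$ lower semicontinuous. (A1): $\phi=+\infty$ on $(X\setminus D_X\phi)\times D_Y\phi$, $\phi=-\infty$ on $D_X\phi\times(Y\setminus D_Y\phi)$. $\lambda^-=\max\{-\lambda,0\}$, $1/\lambda^-:=+\infty$ if $\lambda^-=0$. $\Phi_\tau(x,y;x',y')=\phi(x',y')+\frac1{2\tau}(\mathsf d_X^2(x',x)-\mathsf d_Y^2(y',y))$. $f$ on $Z$ is $\mu$-convex-concave along curves $\gamma,\sigma$ if for all $t\in[0,1]$: $f(\gamma_t,y)\le(1-t)f(\gamma_0,y)+tf(\gamma_1,y)-\frac\mu2t(1-t)\mathsf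 d_X^2(\gamma_0,\gamma_1)$ for all $y$ and $f(x,\sigma_t)\ge(1-t)f(x,\sigma_0)+tf(x,\sigma_1)+\frac\mu2t(1-t)\mathsf d_Y^2(\sigma_0,\sigma_1)$ for all $x$. (A2) for $\lambda$: for every $(x,y)\in Z$, $(x_0,y_0),(x_1,y_1)\in D\phi$ there are continuous curves $\gamma$ from $x_0$ to $x_1$, $\sigma$ from $y_0$ to $y_1$ such that for all $\tau\in(0,1/\lambda^-)$, $(x',y')\mapsto\Phi_\tau(x,y;x',y')$ is $(\tau^{-1}+\lambda)$-convex-concave along them. $J_\tau z$ is the (unique, existing under these assumptions) saddle point of $z'\mapsto\Phi_\tau(z;z')$. Slope: for $z=(x,y)\in D\phi$ not isolated, $|\partial\phi|(z)=\limsup_{D\phi\ni z'=(x',y')\to z}\frac{\max\{\phi(x,y')-\phi(x',y),0\}}{\mathsf d_Z(z',z)}$; $0$ at isolated points of $D\phi$; $+\infty$ off $D\phi$. $D(|\partial\phi|)=\{z\in D\phi:|\partial\phi|(z)<+\infty\}$. *)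

theory Defs
  imports "HOL-Analysis.Analysis" "HOL-Library.Extended_Real"
begin

text \<open>The product metric on 'x \<times> 'y in HOL-Analysis is
  dist (x,y) (x',y') = sqrt ((dist x x')^2 + (dist y y')^2), i.e. d_Z.
  Functionals are curried: phi x y.\<close>

definition DX :: "('x \<Rightarrow> 'y \<Rightarrow> ereal) \<Rightarrow> 'x set" where
  "DX phi = {x. \<forall>y. phi x y < \<infinity>}"

definition DY :: "('x \<Rightarrow> 'y \<Rightarrow> ereal) \<Rightarrow> 'y set" where
  "DY phi = {y. \<forall>x. phi x y > -\<infinity>}"

definition Dom :: "('x \<Rightarrow> 'y \<Rightarrow> ereal) \<Rightarrow> ('x \<times> 'y) set" where
  "Dom phi = DX phi \<times> DY phi"

definition proper_fun :: "('x \<Rightarrow> 'y \<Rightarrow> ereal) \<Rightarrow> bool" where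
  "proper_fun phi \<longleftrightarrow> Dom phi \<noteq> {}"

definition lsc :: "('a::topological_space \<Rightarrow> ereal) \<Rightarrow> bool" where
  "lsc f \<longleftrightarrow> (\<forall>c. open {x. c < f x})"

definition usc :: "('a::topological_space \<Rightarrow> ereal) \<Rightarrow> bool" where
  "usc f \<longleftrightarrow> (\<forall>c. open {x. f x < c})"

definition closed_fun :: "('x::topological_space \<Rightarrow> 'y::topological_space \<Rightarrow> ereal) \<Rightarrow> bool" where
  "closed_fun phi \<longleftrightarrow> (\<forall>x\<in>DX phi. usc (\<lambda>y. phi x y)) \<and> (\<forall>y\<in>DY phi. lsc (\<lambda>x. phi x y))"

definition A1 :: "('x \<Rightarrow> 'y \<Rightarrow> ereal) \<Rightarrow> bool" where
  "A1 phi \<longleftrightarrow> (\<forall>x y. x \<notin> DX phi \<and> y \<in> DY phi \<longrightarrow> phi x y = \<infinity>) \<and>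
                (\<forall>x y. x \<in> DX phi \<and> y \<notin> DY phi \<longrightarrow> phi x y = -\<infinity>)"

definition neg_part :: "real \<Rightarrow> real" where
  "neg_part lam = max (- lam) 0"

text \<open>tau \<in> (0, 1/lam^-), with 1/lam^- = +\<infinity> when lam^- = 0.\<close>
definition admissible_tau :: "real \<Rightarrow> real \<Rightarrow> bool" where
  "admissible_tau lam tau \<longleftrightarrow> 0 < tau \<and> (neg_part lam = 0 \<or> tau < 1 / neg_part lam)"

definition Phi :: "('x::metric_space \<Rightarrow> 'y::metric_space \<Rightarrow> ereal) \<Rightarrow> real \<Rightarrow> 'x \<Rightarrow> 'y \<Rightarrow> 'x \<Rightarrow> 'y \<Rightarrow> ereal" where
  "Phi phi tau x y x' y' = phi x' y' + ereal ((dist x' x ^ 2 - dist y' y ^ 2) / (2 * tau))"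

definition convex_concave_along ::
  "('x::metric_space \<Rightarrow> 'y::metric_space \<Rightarrow> ereal) \<Rightarrow> real \<Rightarrow> (real \<Rightarrow> 'x) \<Rightarrow> (real \<Rightarrow> 'y) \<Rightarrow> bool" where
  "convex_concave_along f mu \<gamma> \<sigma> \<longleftrightarrow>
     (\<forall>t\<in>{0..1}.
        (\<forall>y. f (\<gamma> t) y \<le> ereal (1 - t) * f (\<gamma> 0) y + ereal t * f (\<gamma> 1) y
                     - ereal (mu / 2 * t * (1 - t) * (dist (\<gamma> 0) (\<gamma> 1))^2)) \<and>
        (\<forall>x. f x (\<sigma> t) \<ge> ereal (1 - t) * f x (\<sigma> 0) + ereal t * f x (\<sigma> 1)
                     + ereal (mu / 2 * t * (1 - t) * (dist (\<sigma> 0) (\<sigma> 1))^2)))"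

definition A2 :: "('x::metric_space \<Rightarrow> 'y::metric_space \<Rightarrow> ereal) \<Rightarrow> real \<Rightarrow> bool" where
  "A2 phi lam \<longleftrightarrow>
     (\<forall>x y x0 y0 x1 y1. (x0, y0) \<in> Dom phi \<longrightarrow> (x1, y1) \<in> Dom phi \<longrightarrow>
        (\<exists>\<gamma> \<sigma>. continuous_on {0..1} \<gamma> \<and> \<gamma> 0 = x0 \<and> \<gamma> 1 = x1 \<and>
                continuous_on {0..1} \<sigma> \<and> \<sigma> 0 = y0 \<and> \<sigma> 1 = y1 \<and>
                (\<forall>tau. admissible_tau lam tau \<longrightarrow>
                   convex_concave_along (Phi phi tau x y) (1 / tau + lam) \<gamma> \<sigma>)))"

definition saddle_point :: "('x \<Rightarrow> 'y \<Rightarrow> ereal) \<Rightarrow> 'x \<times> 'y \<Rightarrow> bool" where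
  "saddle_point f p \<longleftrightarrow> (\<forall>x y. f (fst p) y \<le> f (fst p) (snd p) \<and> f (fst p) (snd p) \<le> f x (snd p))"

definition J :: "('x::metric_space \<Rightarrow> 'y::metric_space \<Rightarrow> ereal) \<Rightarrow> real \<Rightarrow> 'x \<times> 'y \<Rightarrow> 'x \<times> 'y" where
  "J phi tau z = (THE p. saddle_point (Phi phi tau (fst z) (snd z)) p)"

definition slope :: "('x::metric_space \<Rightarrow> 'y::metric_space \<Rightarrow> ereal) \<Rightarrow> 'x \<times> 'y \<Rightarrow> ereal" where
  "slope phi z =
     (if z \<notin> Dom phi then \<infinity>
      else if \<not> z islimpt Dom phi then 0
      else Limsup (at z within Dom phi)
             (\<lambda>z'. max (phi (fst z) (snd z') - phi (fst z') (snd z)) 0 / ereal (dist z' z)))"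

definition dom_slope :: "('x::metric_space \<Rightarrow> 'y::metric_space \<Rightarrow> ereal) \<Rightarrow> ('x \<times> 'y) set" where
  "dom_slope phi = {z \<in> Dom phi. slope phi z < \<infinity>}"

end

theory Submission
  imports Defs
begin

lemma le_by_small:
  fixes a c K :: real
  assumes "\<And>e. e > 0 \<Longrightarrow> \<exists>t>0. t < e \<and> a \<le> c + t*K"
  shows "a \<le> c"
proof (rule ccontr)
  assume "\<not> a \<le> c"
  define e where "e = (a-c)/(\<bar>K\<bar>+1)"
  have e: "e > 0" using \<open>\<not> a \<le> c\<close> by (simp add: e_def)
  then obtain t where t: "t > 0" "t < e" "a \<le> c + t*K" using assms by blast
  have "t*K \<le> t*\<bar>K\<bar>" using t by (simp add: mult_left_mono)
  also have "\<dots> < e*(\<bar>K\<bar>+1)" using t e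
    by (smt (verit, best) abs_ge_zero mult_less_cancel_right_pos mult_mono)
  also have "\<dots> = a - c" by (simp add: e_def)
  finally show False using t by linarith
qed

lemma quad_lb:
  fixes a b c u :: real
  assumes "a > 0"
  shows "c - b^2/(4*a) \<le> a*u^2 + b*u + c"
proof -
  have "a*u^2 + b*u + c - (c - b^2/(4*a)) = a*(u + b/(2*a))^2"
    using assms by (simp add: field_simps power2_eq_square)
  moreover have "a*(u + b/(2*a))^2 \<ge> 0" using assms by simp
  ultimately show ?thesis by linarith
qed

lemma abstract_qgrowth:
  fixes G :: "'a::metric_space \<Rightarrow> real"
  assumes m: "m \<in> S" "\<forall>x\<in>S. G m \<le> G x"
    and conv: "\<forall>x0\<in>S. \<forall>x1\<in>S. \<forall>t\<in>{0..1}. \<exists>w\<in>S.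
        G w \<le> (1-t)*G x0 + t*G x1 - mu/2*t*(1-t)*(dist x0 x1)^2"
    and x: "x \<in> S"
  shows "G m + mu/2*(dist m x)^2 \<le> G x"
proof (rule le_by_small)
  fix e :: real assume e: "e > 0"
  define t where "t = min (e/2) 1"
  have t: "0 < t" "t < e" "t \<le> 1" using e by (auto simp: t_def)
  then obtain w where w: "w \<in> S" "G w \<le> (1-t)*G m + t*G x - mu/2*t*(1-t)*(dist m x)^2"
    using conv m x by fastforce
  have "G m \<le> G w" using m w by blast
  hence "t * G m \<le> t*G x - t*(mu/2*(1-t)*(dist m x)^2)" using w by (simp add: algebra_simps)
  moreover have "t*(G x + t*(mu/2*(dist m x)^2)) - t * (G m + mu/2*(dist m x)^2) = (t*G x - t*(mu/2*(1-t)*(dist m x)^2)) - t * G m"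
    by (simp add: field_simps)
  ultimately have "t * (G m + mu/2*(dist m x)^2) \<le> t*(G x + t*(mu/2*(dist m x)^2))" by linarith
  hence "G m + mu/2*(dist m x)^2 \<le> G x + t*(mu/2*(dist m x)^2)" using t by simp
  thus "\<exists>t>0. t < e \<and> G m + mu/2*(dist m x)^2 \<le> G x + t*(mu/2*(dist m x)^2)" using t by blast
qed

lemma abstract_min:
  fixes G :: "'a::complete_space \<Rightarrow> real"
  assumes ne: "S \<noteq> {}"
    and lsc: "\<And>x0 c. (x0 \<in> S \<Longrightarrow> c < G x0) \<Longrightarrow> \<exists>r>0. \<forall>x\<in>S. dist x x0 < r \<longrightarrow> c < G x"
    and bdd: "\<And>x. x \<in> S \<Longrightarrow> B \<le> G x"
    and conv: "\<forall>x0\<in>S. \<forall>x1\<in>S. \<forall>t\<in>{0..1}. \<exists>w\<in>S.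
        G w \<le> (1-t)*G x0 + t*G x1 - mu/2*t*(1-t)*(dist x0 x1)^2"
    and mu: "mu > 0"
  shows "\<exists>m\<in>S. \<forall>x\<in>S. G m \<le> G x"
proof -
  define I where "I = Inf (G ` S)"
  have bb: "bdd_below (G ` S)" using bdd by (auto simp: bdd_below_def)
  have I_le: "I \<le> G x" if "x \<in> S" for x unfolding I_def using bb that by (simp add: cInf_lower)
  have approx: "\<exists>x\<in>S. G x < I + e" if "e > 0" for e
  proof -
    have "Inf (G ` S) < I + e" using that unfolding I_def by linarith
    then obtain y where "y \<in> G ` S" "y < I + e" using cInf_less_iff[of "G ` S"] ne bb by blast
    thus ?thesis by blast
  qed
  have "\<forall>n. \<exists>x\<in>S. G x < I + 1/real (Suc n)" using approx by simp
  hence "\<forall>n. \<exists>x. x \<in> S \<and> G x < I + 1/real (Suc n)" by blast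
  from choice[OF this] obtain xs where xs0: "\<forall>n. xs n \<in> S \<and> G (xs n) < I + 1/real (Suc n)" by blast
  hence xs: "\<And>n. xs n \<in> S" "\<And>n. G (xs n) < I + 1/real (Suc n)" by auto
  have "Cauchy xs"
  proof (rule metric_CauchyI)
    fix e :: real assume e: "e > 0"
    obtain N where N: "8/(mu*e^2) < real N" using reals_Archimedean2 by blast
    have "dist (xs m) (xs n) < e" if "m \<ge> N" "n \<ge> N" for m n
    proof -
      obtain w where w: "w \<in> S" "G w \<le> (1-1/2)*G (xs m) + (1/2)*G (xs n) - mu/2*(1/2)*(1-1/2)*(dist (xs m) (xs n))^2"
        using conv[rule_format, OF xs(1)[of m] xs(1)[of n], of "1/2"] by auto
      have Nm: "1/real (Suc m) \<le> 1/real (Suc N)" "1/real (Suc n) \<le> 1/real (Suc N)"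
        using that by (auto intro!: divide_left_mono)
      have "I \<le> G w" using I_le w by blast
      moreover have "(1-1/2)*G (xs m) + (1/2)*G (xs n) - mu/2*(1/2)*(1-1/2)*(dist (xs m) (xs n))^2
          = G (xs m)/2 + G (xs n)/2 - mu/8*(dist (xs m) (xs n))^2" by (simp add: field_simps)
      ultimately have "mu/8*(dist (xs m) (xs n))^2 < 1/real (Suc N)" using w xs(2)[of m] xs(2)[of n] Nm by linarith
      hence "mu*(dist (xs m) (xs n))^2 < 8/real (Suc N)" by (simp add: field_simps)
      also have "\<dots> < mu*e^2"
      proof -
        have "8/(mu*e^2) < real (Suc N)" using N by simp
        thus ?thesis using mu e by (simp add: field_simps)
      qed
      finally have "(dist (xs m) (xs n))^2 < e^2" using mu by simp
      thus ?thesis using e by (simp add: power_less_imp_less_base)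
    qed
    thus "\<exists>M. \<forall>m\<ge>M. \<forall>n\<ge>M. dist (xs m) (xs n) < e" by blast
  qed
  then obtain L where L: "xs \<longlonglongrightarrow> L" using Cauchy_convergent_iff convergent_def by blast
  have "L \<in> S \<and> G L \<le> I"
  proof (rule ccontr)
    assume nc: "\<not> (L \<in> S \<and> G L \<le> I)"
    define d where "d = (if L \<in> S then (G L - I)/2 else 1)"
    have d: "d > 0" "L \<in> S \<Longrightarrow> I + d < G L" using nc unfolding d_def by (auto simp: field_simps)
    obtain r where r: "r > 0" "\<forall>x\<in>S. dist x L < r \<longrightarrow> I + d < G x" using lsc[of L "I + d"] d by blast
    obtain N1 where N1: "\<forall>n\<ge>N1. dist (xs n) L < r" using L r(1) lim_sequentially by blast
    obtain N2 where N2: "1/d < real N2" using reals_Archimedean2 by blast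
    define n where "n = max N1 N2"
    have "I + d < G (xs n)" using r(2) N1 xs(1) by (simp add: n_def)
    moreover have "1/real (Suc n) < d"
    proof -
      have "1/d < real (Suc n)" using N2 by (simp add: n_def)
      thus ?thesis using d by (simp add: field_simps)
    qed
    ultimately show False using xs(2)[of n] by simp
  qed
  thus ?thesis using I_le by force
qed

lemma abstract_lb_step:
  fixes g :: "'a::metric_space \<Rightarrow> real"
  assumes x0: "x0 \<in> S"
    and r: "r > 0" and loc: "\<forall>x\<in>S. dist x x0 < r \<longrightarrow> g x0 - 1 < g x"
    and curve: "\<forall>x1\<in>S. \<forall>t\<in>{0..1}. \<exists>w\<in>S. dist w x0 \<le> t * dist x0 x1 \<and>
        g w \<le> (1-t)*g x0 + t*g x1 + t^2*(dist x0 x1)^2/(2*tau) - lam*t*(1-t)*(dist x0 x1)^2/2"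
    and tau: "tau > 0" and mu: "1/tau + lam > 0"
    and x1: "x1 \<in> S"
  shows "g x0 - 2 - 2*dist x0 x1/r + min 0 ((1/tau+lam)/4 - 1/(2*tau)) * (dist x0 x1)^2 \<le> g x1"
proof (cases "dist x0 x1 = 0")
  case True
  then show ?thesis by simp
next
  case False
  define D where "D = dist x0 x1"
  have D: "D > 0" using False by (simp add: D_def)
  define t where "t = min (1/2) (r/(2*D))"
  have t: "0 < t" "t \<le> 1/2" "t*D \<le> r/2" using D r by (auto simp: t_def min_def field_simps)
  obtain w where w: "w \<in> S" "dist w x0 \<le> t*D"
     "g w \<le> (1-t)*g x0 + t*g x1 + t^2*D^2/(2*tau) - lam*t*(1-t)*D^2/2"
    using curve x1 t unfolding D_def by fastforce
  have "g x0 - 1 < g w" using loc w t r by force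
  define k where "k = lam*(1-t)/2 - t/(2*tau)"
  have eq: "t*(k*D^2) = lam*t*(1-t)*D^2/2 - t^2*D^2/(2*tau)" by (simp add: k_def field_simps power2_eq_square)
  have e2: "(1-t)*g x0 = g x0 - t*g x0" by (simp add: algebra_simps)
  have "t*g x1 > t*g x0 - 1 + t*(k*D^2)" using \<open>g x0 - 1 < g w\<close> w(3) eq e2 by linarith
  moreover have "t*(1/t) = 1" using t by simp
  ultimately have "t*(g x1 - (g x0 - 1/t + k*D^2)) > 0" by (simp add: algebra_simps)
  hence g1: "g x1 > g x0 - 1/t + k*D^2" using t by (simp add: zero_less_mult_iff)
  have it: "1/t \<le> 2 + 2*D/r"
  proof (cases "1/2 \<le> r/(2*D)")
    case True
    hence t2: "t = 1/2" by (simp add: t_def)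
    have "0 \<le> 2*D/r" using D r by simp
    thus ?thesis unfolding t2 by simp
  next
    case False
    hence "t = r/(2*D)" by (simp add: t_def)
    hence "1/t = 2*D/r" by simp
    thus ?thesis by simp
  qed
  have kk: "k = (1-t)*(1/tau+lam)/2 - 1/(2*tau)" using tau by (simp add: k_def field_simps)
  have "(1-t)*(1/tau+lam) \<ge> (1/2)*(1/tau+lam)" using t mu by (intro mult_right_mono) auto
  moreover have "\<And>X m q::real. m/2 \<le> X \<Longrightarrow> k = X/2 - q \<Longrightarrow> m/4 - q \<le> k" by linarith
  ultimately have "k \<ge> (1/tau+lam)/4 - 1/(2*tau)" using kk by (metis times_divide_eq_left mult_1)
  hence "k \<ge> min 0 ((1/tau+lam)/4 - 1/(2*tau))" by simp
  hence "k*D^2 \<ge> min 0 ((1/tau+lam)/4 - 1/(2*tau))*D^2" by (simp add: mult_right_mono)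
  thus ?thesis using g1 it unfolding D_def by linarith
qed

lemma abstract_lb:
  fixes g :: "'a::metric_space \<Rightarrow> real"
  assumes x0: "x0 \<in> S"
    and r: "r > 0" and loc: "\<forall>x\<in>S. dist x x0 < r \<longrightarrow> g x0 - 1 < g x"
    and curve: "\<forall>x1\<in>S. \<forall>t\<in>{0..1}. \<exists>w\<in>S. dist w x0 \<le> t * dist x0 x1 \<and>
        g w \<le> (1-t)*g x0 + t*g x1 + t^2*(dist x0 x1)^2/(2*tau) - lam*t*(1-t)*(dist x0 x1)^2/2"
    and tau: "tau > 0" and mu: "1/tau + lam > 0"
  shows "\<exists>B. \<forall>x\<in>S. B \<le> g x + (dist x xb)^2/(2*tau)"
proof -
  define k1 where "k1 = min 0 ((1/tau+lam)/4 - 1/(2*tau))"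
  define e where "e = dist x0 xb"
  define a where "a = k1 + 1/(2*tau)"
  define b where "b = -2/r + 2*k1*e"
  define c where "c = g x0 - 2 - 2*e/r + k1*e^2"
  have k1: "k1 \<le> 0" by (simp add: k1_def)
  have a: "a > 0"
  proof -
    have "a = min (1/(2*tau)) ((1/tau+lam)/4)" unfolding a_def k1_def by (simp add: min_def)
    thus ?thesis using tau mu by simp
  qed
  have "c - b^2/(4*a) \<le> g x + (dist x xb)^2/(2*tau)" if x: "x \<in> S" for x
  proof -
    define D where "D = dist x0 x"
    define u where "u = dist x xb"
    have st: "g x0 - 2 - 2*D/r + k1*D^2 \<le> g x"
      using abstract_lb_step[OF x0 r loc curve tau mu x] unfolding k1_def D_def by (simp add: dist_commute)
    have Deu: "D \<le> e + u" unfolding D_def e_def u_def by (metis dist_commute dist_triangle)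
    have D0: "0 \<le> D" by (simp add: D_def)
    have "D^2 \<le> (e+u)^2" using Deu D0 by (simp add: power_mono)
    hence "k1*(e+u)^2 \<le> k1*D^2" using k1 by (simp add: mult_left_mono_neg)
    moreover have "2*D/r \<le> 2*(e+u)/r" using Deu r by (simp add: divide_right_mono)
    ultimately have "g x0 - 2 - 2*(e+u)/r + k1*(e+u)^2 \<le> g x" using st by linarith
    moreover have "g x0 - 2 - 2*(e+u)/r + k1*(e+u)^2 + u^2/(2*tau) = a*u^2 + b*u + c"
      unfolding a_def b_def c_def using r tau by (simp add: field_simps power2_eq_square)
    moreover have "c - b^2/(4*a) \<le> a*u^2 + b*u + c" using quad_lb[OF a] by blast
    ultimately show ?thesis unfolding u_def by linarith
  qed
  thus ?thesis by blast
qed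

lemma resc:
  fixes q t p p0 p1 a a0 a1 c l D2 :: real
  assumes q: "q > 0"
    and h: "p + (a - c)/(2*q) \<le> (1-t)*(p0 + (a0 - c)/(2*q)) + t*(p1 + (a1 - c)/(2*q)) - (1/q+l)/2*t*(1-t)*D2"
  shows "a \<le> (1-t)*a0 + t*a1 - t*(1-t)*D2 + q*(2*((1-t)*p0 + t*p1 - p) - l*t*(1-t)*D2)"
proof -
  have "2*q*(p + (a - c)/(2*q)) \<le> 2*q*((1-t)*(p0 + (a0 - c)/(2*q)) + t*(p1 + (a1 - c)/(2*q)) - (1/q+l)/2*t*(1-t)*D2)"
    using h q by (intro mult_left_mono) auto
  moreover have "2*q*(p + (a - c)/(2*q)) = 2*q*p + a - c" using q by (simp add: field_simps)
  moreover have "2*q*((1-t)*(p0 + (a0 - c)/(2*q)) + t*(p1 + (a1 - c)/(2*q)) - (1/q+l)/2*t*(1-t)*D2)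
     = ((1-t)*a0 + t*a1 - t*(1-t)*D2 + q*(2*((1-t)*p0 + t*p1 - p) - l*t*(1-t)*D2)) + 2*q*p - c"
    using q by (simp add: field_simps)
  ultimately show ?thesis by linarith
qed

locale sp =
  fixes phi :: "'x::complete_space \<Rightarrow> 'y::complete_space \<Rightarrow> ereal" and lam tau :: real
  assumes prp: "proper_fun phi" and clo: "closed_fun phi" and a1: "A1 phi" and a2: "A2 phi lam"
    and adm: "admissible_tau lam tau"
begin

definition P :: "'x \<Rightarrow> 'y \<Rightarrow> real" where "P x y = real_of_ereal (phi x y)"
definition Fb :: "real \<Rightarrow> 'x \<Rightarrow> 'y \<Rightarrow> 'x \<Rightarrow> 'y \<Rightarrow> real" where
  "Fb q xb yb x y = P x y + ((dist x xb)^2 - (dist y yb)^2)/(2*q)"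

lemma adm_props:
  assumes "admissible_tau lam q"
  shows "q > 0" "1/q + lam > 0" "1 + lam*q > 0"
proof -
  show q: "q > 0" using assms by (simp add: admissible_tau_def)
  have "1 + lam*q > 0"
  proof (cases "lam \<ge> 0")
    case True
    hence "0 \<le> lam*q" using q by simp
    thus ?thesis by linarith
  next
    case False
    hence "neg_part lam = -lam" by (simp add: neg_part_def)
    hence "q < 1/(-lam)" using assms False by (simp add: admissible_tau_def)
    hence "q*(-lam) < 1" using False by (simp add: field_simps)
    thus ?thesis by (simp add: algebra_simps)
  qed
  thus "1 + lam*q > 0" .
  have "1/q + lam = (1 + lam*q)/q" using q by (simp add: field_simps)
  thus "1/q + lam > 0" using q \<open>1 + lam*q > 0\<close> by simp
qed

lemma small_tau:
  assumes "e > 0" shows "\<exists>q. admissible_tau lam q \<and> q < e"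
proof -
  have t: "tau > 0" using adm_props[OF adm] by simp
  define q where "q = min (e/2) (tau/2)"
  have "q > 0" "q < e" "q < tau" using assms t by (auto simp: q_def)
  hence "admissible_tau lam q" using adm by (auto simp: admissible_tau_def)
  thus ?thesis using \<open>q < e\<close> by blast
qed

lemma fin: "x \<in> DX phi \<Longrightarrow> y \<in> DY phi \<Longrightarrow> phi x y = ereal (P x y)"
  unfolding P_def DX_def DY_def by (cases "phi x y") auto

lemma notDX: "x \<notin> DX phi \<Longrightarrow> y \<in> DY phi \<Longrightarrow> phi x y = \<infinity>"
  using a1 by (auto simp: A1_def)
lemma notDY: "x \<in> DX phi \<Longrightarrow> y \<notin> DY phi \<Longrightarrow> phi x y = -\<infinity>"
  using a1 by (auto simp: A1_def)

lemma Phi_real: "x \<in> DX phi \<Longrightarrow> y \<in> DY phi \<Longrightarrow> Phi phi q xb yb x y = ereal (Fb q xb yb x y)"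
  unfolding Phi_def Fb_def by (simp add: fin)

lemma Dom_ne: obtains xa ya where "xa \<in> DX phi" "ya \<in> DY phi"
  using prp by (auto simp: proper_fun_def Dom_def)

lemma curve:
  assumes x0: "x0 \<in> DX phi" and x1: "x1 \<in> DX phi" and y0: "y0 \<in> DY phi" and y1: "y1 \<in> DY phi"
  obtains \<gamma> \<sigma> where "\<gamma> 0 = x0" "\<gamma> 1 = x1" "\<sigma> 0 = y0" "\<sigma> 1 = y1"
    "\<And>t. t \<in> {0..1} \<Longrightarrow> \<gamma> t \<in> DX phi" "\<And>t. t \<in> {0..1} \<Longrightarrow> \<sigma> t \<in> DY phi"
    "\<And>t q y. t \<in> {0..1} \<Longrightarrow> admissible_tau lam q \<Longrightarrow> y \<in> DY phi \<Longrightarrow>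
       Fb q xb yb (\<gamma> t) y \<le> (1-t)*Fb q xb yb x0 y + t*Fb q xb yb x1 y - (1/q+lam)/2*t*(1-t)*(dist x0 x1)^2"
    "\<And>t q x. t \<in> {0..1} \<Longrightarrow> admissible_tau lam q \<Longrightarrow> x \<in> DX phi \<Longrightarrow>
       Fb q xb yb x (\<sigma> t) \<ge> (1-t)*Fb q xb yb x y0 + t*Fb q xb yb x y1 + (1/q+lam)/2*t*(1-t)*(dist y0 y1)^2"
    "\<And>t. t \<in> {0..1} \<Longrightarrow> (dist (\<gamma> t) xb)^2 \<le> (1-t)*(dist x0 xb)^2 + t*(dist x1 xb)^2 - t*(1-t)*(dist x0 x1)^2"
    "\<And>t. t \<in> {0..1} \<Longrightarrow> (dist (\<sigma> t) yb)^2 \<le> (1-t)*(dist y0 yb)^2 + t*(dist y1 yb)^2 - t*(1-t)*(dist y0 y1)^2"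
proof -
  have "(x0,y0) \<in> Dom phi" "(x1,y1) \<in> Dom phi" using assms by (auto simp: Dom_def)
  then obtain \<gamma> \<sigma> where g0: "\<gamma> 0 = x0" "\<gamma> 1 = x1" "\<sigma> 0 = y0" "\<sigma> 1 = y1"
    and cc: "\<And>q. admissible_tau lam q \<Longrightarrow> convex_concave_along (Phi phi q xb yb) (1/q+lam) \<gamma> \<sigma>"
    using a2 unfolding A2_def by metis
  have cx: "Phi phi q xb yb (\<gamma> t) y \<le> ereal (1-t) * Phi phi q xb yb x0 y + ereal t * Phi phi q xb yb x1 y
      - ereal ((1/q+lam)/2*t*(1-t)*(dist x0 x1)^2)"
    if "t \<in> {0..1}" "admissible_tau lam q" for t q y
    using cc[OF that(2)] that(1) g0 unfolding convex_concave_along_def by auto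
  have cy: "Phi phi q xb yb x (\<sigma> t) \<ge> ereal (1-t) * Phi phi q xb yb x y0 + ereal t * Phi phi q xb yb x y1
      + ereal ((1/q+lam)/2*t*(1-t)*(dist y0 y1)^2)"
    if "t \<in> {0..1}" "admissible_tau lam q" for t q x
    using cc[OF that(2)] that(1) g0 unfolding convex_concave_along_def by auto
  have gDX: "\<gamma> t \<in> DX phi" if t: "t \<in> {0..1}" for t
  proof (rule ccontr)
    assume "\<gamma> t \<notin> DX phi"
    hence "phi (\<gamma> t) y0 = \<infinity>" using notDX y0 by blast
    hence "Phi phi tau xb yb (\<gamma> t) y0 = \<infinity>" by (simp add: Phi_def)
    moreover have "ereal (1-t) * Phi phi tau xb yb x0 y0 + ereal t * Phi phi tau xb yb x1 y0
      - ereal ((1/tau+lam)/2*t*(1-t)*(dist x0 x1)^2) < \<infinity>"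
      using x0 x1 y0 by (simp add: Phi_real)
    ultimately show False using cx[OF t adm, of y0] by simp
  qed
  have sDY: "\<sigma> t \<in> DY phi" if t: "t \<in> {0..1}" for t
  proof (rule ccontr)
    assume "\<sigma> t \<notin> DY phi"
    hence "phi x0 (\<sigma> t) = -\<infinity>" using notDY x0 by blast
    hence "Phi phi tau xb yb x0 (\<sigma> t) = -\<infinity>" by (simp add: Phi_def)
    moreover have "ereal (1-t) * Phi phi tau xb yb x0 y0 + ereal t * Phi phi tau xb yb x0 y1
      + ereal ((1/tau+lam)/2*t*(1-t)*(dist y0 y1)^2) > -\<infinity>"
      using x0 y1 y0 by (simp add: Phi_real)
    ultimately show False using cy[OF t adm, of x0] by (metis leD)
  qed
  have rx: "Fb q xb yb (\<gamma> t) y \<le> (1-t)*Fb q xb yb x0 y + t*Fb q xb yb x1 y - (1/q+lam)/2*t*(1-t)*(dist x0 x1)^2"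
    if "t \<in> {0..1}" "admissible_tau lam q" "y \<in> DY phi" for t q y
    using cx[OF that(1,2), of y] gDX[OF that(1)] x0 x1 that(3) by (simp add: Phi_real)
  have ry: "Fb q xb yb x (\<sigma> t) \<ge> (1-t)*Fb q xb yb x y0 + t*Fb q xb yb x y1 + (1/q+lam)/2*t*(1-t)*(dist y0 y1)^2"
    if "t \<in> {0..1}" "admissible_tau lam q" "x \<in> DX phi" for t q x
    using cy[OF that(1,2), of x] sDY[OF that(1)] y0 y1 that(3) by (simp add: Phi_real)
  have dx: "(dist (\<gamma> t) xb)^2 \<le> (1-t)*(dist x0 xb)^2 + t*(dist x1 xb)^2 - t*(1-t)*(dist x0 x1)^2"
    if t: "t \<in> {0..1}" for t
  proof (rule le_by_small)
    fix e :: real assume "e > 0"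
    then obtain q where q: "admissible_tau lam q" "q < e" using small_tau by blast
    have sp: "q > 0" using adm_props[OF q(1)] by simp
    have "P (\<gamma> t) y0 + ((dist (\<gamma> t) xb)^2 - (dist y0 yb)^2)/(2*q) \<le>
      (1-t)*(P x0 y0 + ((dist x0 xb)^2 - (dist y0 yb)^2)/(2*q)) + t*(P x1 y0 + ((dist x1 xb)^2 - (dist y0 yb)^2)/(2*q))
      - (1/q+lam)/2*t*(1-t)*(dist x0 x1)^2"
      using rx[OF t q(1) y0] by (simp add: Fb_def)
    from resc[OF sp this] sp q(2)
    show "\<exists>q>0. q < e \<and> (dist (\<gamma> t) xb)^2 \<le> (1-t)*(dist x0 xb)^2 + t*(dist x1 xb)^2 - t*(1-t)*(dist x0 x1)^2
        + q*(2*((1-t)*P x0 y0 + t*P x1 y0 - P (\<gamma> t) y0) - lam*t*(1-t)*(dist x0 x1)^2)"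
      by blast
  qed
  have dy: "(dist (\<sigma> t) yb)^2 \<le> (1-t)*(dist y0 yb)^2 + t*(dist y1 yb)^2 - t*(1-t)*(dist y0 y1)^2"
    if t: "t \<in> {0..1}" for t
  proof (rule le_by_small)
    fix e :: real assume "e > 0"
    then obtain q where q: "admissible_tau lam q" "q < e" using small_tau by blast
    have sp: "q > 0" using adm_props[OF q(1)] by simp
    have "Fb q xb yb x0 (\<sigma> t) \<ge> (1-t)*Fb q xb yb x0 y0 + t*Fb q xb yb x0 y1 + (1/q+lam)/2*t*(1-t)*(dist y0 y1)^2"
      using ry[OF t q(1) x0] .
    hence "- P x0 (\<sigma> t) + ((dist (\<sigma> t) yb)^2 - (dist x0 xb)^2)/(2*q) \<le>
      (1-t)*(- P x0 y0 + ((dist y0 yb)^2 - (dist x0 xb)^2)/(2*q)) + t*(- P x0 y1 + ((dist y1 yb)^2 - (dist x0 xb)^2)/(2*q))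
      - (1/q+lam)/2*t*(1-t)*(dist y0 y1)^2"
      using sp unfolding Fb_def by (simp add: field_simps)
    from resc[OF sp this] sp q(2)
    show "\<exists>q>0. q < e \<and> (dist (\<sigma> t) yb)^2 \<le> (1-t)*(dist y0 yb)^2 + t*(dist y1 yb)^2 - t*(1-t)*(dist y0 y1)^2
        + q*(2*((1-t)*(- P x0 y0) + t*(- P x0 y1) - (- P x0 (\<sigma> t))) - lam*t*(1-t)*(dist y0 y1)^2)"
      by blast
  qed
  show ?thesis using that g0 gDX sDY rx ry dx dy by blast
qed

end

lemma d2cont:
  fixes x0 xb :: "'a::metric_space"
  assumes "d > 0"
  shows "\<exists>r>0. \<forall>x. dist x x0 < r \<longrightarrow> \<bar>(dist x xb)^2 - (dist x0 xb)^2\<bar> < d"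
proof -
  have "isCont (\<lambda>x. (dist x xb)^2) x0" by (intro continuous_intros)
  then obtain r where "r > 0" "\<forall>x. dist x x0 < r \<longrightarrow> dist ((dist x xb)^2) ((dist x0 xb)^2) < d"
    using assms unfolding continuous_at_eps_delta by blast
  thus ?thesis by (auto simp: dist_real_def)
qed

lemma open_ball_ex:
  assumes "open S" "x0 \<in> S"
  shows "\<exists>r>0. \<forall>x. dist x x0 < r \<longrightarrow> x \<in> S"
  using assms by (metis dist_commute open_dist)

locale sp2 = sp phi lam tau
  for phi :: "'x::complete_space \<Rightarrow> 'y::complete_space \<Rightarrow> ereal" and lam tau :: real +
  fixes xb :: 'x and yb :: 'y
begin

definition F :: "'x \<Rightarrow> 'y \<Rightarrow> real" where "F x y = Fb tau xb yb x y"

lemma tau_pos: "tau > 0" and mu_pos: "1/tau + lam > 0" using adm_props[OF adm] by auto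

lemma lsc_x:
  assumes y: "y \<in> DY phi" and h: "x0 \<in> DX phi \<Longrightarrow> c < F x0 y"
  shows "\<exists>r>0. \<forall>x\<in>DX phi. dist x x0 < r \<longrightarrow> c < F x y"
proof -
  define qx where "qx x = ((dist x xb)^2 - (dist y yb)^2)/(2*tau)" for x
  have Fq: "F x y = P x y + qx x" for x by (simp add: F_def Fb_def qx_def)
  obtain cP d where cd: "d > 0" "ereal cP < phi x0 y" "c \<le> cP + qx x0 - d"
  proof (cases "x0 \<in> DX phi")
    case True
    define d where "d = (F x0 y - c)/2"
    have "d > 0" using h True by (simp add: d_def)
    moreover have "ereal (P x0 y - d) < phi x0 y" using fin[OF True y] \<open>d > 0\<close> by simp
    moreover have "c \<le> (P x0 y - d) + qx x0 - d" using Fq[of x0] by (simp add: d_def)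
    ultimately show ?thesis using that by blast
  next
    case False
    hence "phi x0 y = \<infinity>" using notDX y by blast
    thus ?thesis using that[of 1 "c - qx x0 + 1"] by simp
  qed
  have "open {x. ereal cP < phi x y}" using clo y by (auto simp: closed_fun_def lsc_def)
  then obtain r1 where r1: "r1 > 0" "\<forall>x. dist x x0 < r1 \<longrightarrow> ereal cP < phi x y"
    using open_ball_ex[of "{x. ereal cP < phi x y}" x0] cd(2) by auto
  obtain r2 where r2: "r2 > 0" "\<forall>x. dist x x0 < r2 \<longrightarrow> \<bar>(dist x xb)^2 - (dist x0 xb)^2\<bar> < 2*tau*d"
    using d2cont[of "2*tau*d" x0 xb] cd(1) tau_pos by auto
  have "c < F x y" if x: "x \<in> DX phi" "dist x x0 < min r1 r2" for x
  proof -
    have "ereal cP < ereal (P x y)" using r1 x fin[OF x(1) y] by auto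
    hence "cP < P x y" by simp
    moreover have "(dist x0 xb)^2 - 2*tau*d < (dist x xb)^2" using r2 x by auto
    hence "((dist x0 xb)^2 - 2*tau*d - (dist y yb)^2)/(2*tau) < qx x"
      unfolding qx_def using tau_pos by (intro divide_strict_right_mono) auto
    moreover have "((dist x0 xb)^2 - 2*tau*d - (dist y yb)^2)/(2*tau) = qx x0 - d"
      unfolding qx_def using tau_pos by (simp add: field_simps)
    ultimately show ?thesis using Fq[of x] cd(3) by linarith
  qed
  thus ?thesis using r1 r2 by (intro exI[of _ "min r1 r2"]) auto
qed

lemma usc_y:
  assumes x: "x \<in> DX phi" and h: "y0 \<in> DY phi \<Longrightarrow> F x y0 < c"
  shows "\<exists>r>0. \<forall>y\<in>DY phi. dist y y0 < r \<longrightarrow> F x y < c"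
proof -
  define qy where "qy y = ((dist x xb)^2 - (dist y yb)^2)/(2*tau)" for y
  have Fq: "F x y = P x y + qy y" for y by (simp add: F_def Fb_def qy_def)
  obtain cP d where cd: "d > 0" "phi x y0 < ereal cP" "cP + qy y0 + d \<le> c"
  proof (cases "y0 \<in> DY phi")
    case True
    define d where "d = (c - F x y0)/2"
    have "d > 0" using h True by (simp add: d_def)
    moreover have "phi x y0 < ereal (P x y0 + d)" using fin[OF x True] \<open>d > 0\<close> by simp
    moreover have "(P x y0 + d) + qy y0 + d \<le> c" using Fq[of y0] by (simp add: d_def)
    ultimately show ?thesis using that by blast
  next
    case False
    hence "phi x y0 = -\<infinity>" using notDY x by blast
    thus ?thesis using that[of 1 "c - qy y0 - 1"] by simp
  qed
  have "open {y. phi x y < ereal cP}" using clo x by (auto simp: closed_fun_def usc_def)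
  then obtain r1 where r1: "r1 > 0" "\<forall>y. dist y y0 < r1 \<longrightarrow> phi x y < ereal cP"
    using open_ball_ex[of "{y. phi x y < ereal cP}" y0] cd(2) by auto
  obtain r2 where r2: "r2 > 0" "\<forall>y. dist y y0 < r2 \<longrightarrow> \<bar>(dist y yb)^2 - (dist y0 yb)^2\<bar> < 2*tau*d"
    using d2cont[of "2*tau*d" y0 yb] cd(1) tau_pos by auto
  have "F x y < c" if y: "y \<in> DY phi" "dist y y0 < min r1 r2" for y
  proof -
    have "ereal (P x y) < ereal cP" using r1 y fin[OF x y(1)] by auto
    hence "P x y < cP" by simp
    moreover have "(dist y0 yb)^2 - 2*tau*d < (dist y yb)^2" using r2 y by auto
    hence "qy y < ((dist x xb)^2 - ((dist y0 yb)^2 - 2*tau*d))/(2*tau)"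
      unfolding qy_def using tau_pos by (intro divide_strict_right_mono) auto
    moreover have "((dist x xb)^2 - ((dist y0 yb)^2 - 2*tau*d))/(2*tau) = qy y0 + d"
      unfolding qy_def using tau_pos by (simp add: field_simps)
    ultimately show ?thesis using Fq[of y] cd(3) by linarith
  qed
  thus ?thesis using r1 r2 by (intro exI[of _ "min r1 r2"]) auto
qed

end

context sp2 begin

lemma Fb_tau: "Fb tau xb yb x y = F x y" by (simp add: F_def)

lemma conv_x:
  assumes y: "y \<in> DY phi"
  shows "\<forall>x0\<in>DX phi. \<forall>x1\<in>DX phi. \<forall>t\<in>{0..1}. \<exists>w\<in>DX phi.
        F w y \<le> (1-t)*F x0 y + t*F x1 y - (1/tau+lam)/2*t*(1-t)*(dist x0 x1)^2"
proof (intro ballI)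
  fix x0 x1 t assume x0: "x0 \<in> DX phi" and x1: "x1 \<in> DX phi" and t: "t \<in> {0..1::real}"
  obtain \<gamma> \<sigma> where c: "\<gamma> 0 = x0" "\<gamma> 1 = x1" "\<And>t. t \<in> {0..1} \<Longrightarrow> \<gamma> t \<in> DX phi"
    "\<And>t q y'. t \<in> {0..1} \<Longrightarrow> admissible_tau lam q \<Longrightarrow> y' \<in> DY phi \<Longrightarrow>
       Fb q xb yb (\<gamma> t) y' \<le> (1-t)*Fb q xb yb x0 y' + t*Fb q xb yb x1 y' - (1/q+lam)/2*t*(1-t)*(dist x0 x1)^2"
    by (rule curve[OF x0 x1 y y, where xb=xb and yb=yb], rule that, assumption+)
  show "\<exists>w\<in>DX phi. F w y \<le> (1-t)*F x0 y + t*F x1 y - (1/tau+lam)/2*t*(1-t)*(dist x0 x1)^2"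
    using c(3)[OF t] c(4)[OF t adm y] by (auto simp: Fb_tau)
qed

lemma conc_y:
  assumes x: "x \<in> DX phi"
  shows "\<forall>y0\<in>DY phi. \<forall>y1\<in>DY phi. \<forall>t\<in>{0..1}. \<exists>w\<in>DY phi.
        - F x w \<le> (1-t)*(- F x y0) + t*(- F x y1) - (1/tau+lam)/2*t*(1-t)*(dist y0 y1)^2"
proof (intro ballI)
  fix y0 y1 t assume y0: "y0 \<in> DY phi" and y1: "y1 \<in> DY phi" and t: "t \<in> {0..1::real}"
  obtain \<gamma> \<sigma> where c: "\<sigma> 0 = y0" "\<sigma> 1 = y1" "\<And>t. t \<in> {0..1} \<Longrightarrow> \<sigma> t \<in> DY phi"
    "\<And>t q x'. t \<in> {0..1} \<Longrightarrow> admissible_tau lam q \<Longrightarrow> x' \<in> DX phi \<Longrightarrow>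
       Fb q xb yb x' (\<sigma> t) \<ge> (1-t)*Fb q xb yb x' y0 + t*Fb q xb yb x' y1 + (1/q+lam)/2*t*(1-t)*(dist y0 y1)^2"
    by (rule curve[OF x x y0 y1, where xb=xb and yb=yb], rule that, assumption+)
  have "F x (\<sigma> t) \<ge> (1-t)*F x y0 + t*F x y1 + (1/tau+lam)/2*t*(1-t)*(dist y0 y1)^2"
    using c(4)[OF t adm x] by (simp add: Fb_tau)
  moreover have "(1-t)*(- F x y0) = - ((1-t)*F x y0)" "t*(- F x y1) = - (t*F x y1)" by simp_all
  ultimately have "- F x (\<sigma> t) \<le> (1-t)*(- F x y0) + t*(- F x y1) - (1/tau+lam)/2*t*(1-t)*(dist y0 y1)^2"
    by linarith
  thus "\<exists>w\<in>DY phi. - F x w \<le> (1-t)*(- F x y0) + t*(- F x y1) - (1/tau+lam)/2*t*(1-t)*(dist y0 y1)^2"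
    using c(3)[OF t] by blast
qed

lemma dist_from_sq:
  fixes a D t :: real
  assumes "a^2 \<le> (1-t)*0 + t*D^2 - t*(1-t)*D^2" "t \<ge> 0" "D \<ge> 0" "a \<ge> 0"
  shows "a \<le> t*D"
proof -
  have "t*D^2 - t*(1-t)*D^2 = (t*D)^2" by (simp add: power2_eq_square right_diff_distrib left_diff_distrib)
  hence "a^2 \<le> (t*D)^2" using assms(1) by simp
  moreover have "0 \<le> t*D" using assms by simp
  ultimately show ?thesis using power2_le_imp_le by blast
qed

lemma lb_x:
  assumes y: "y \<in> DY phi"
  shows "\<exists>B. \<forall>x\<in>DX phi. B \<le> F x y"
proof -
  obtain x0 ya where x0: "x0 \<in> DX phi" using Dom_ne by blast
  have "open {x. ereal (P x0 y - 1) < phi x y}" using clo y by (auto simp: closed_fun_def lsc_def)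
  moreover have "x0 \<in> {x. ereal (P x0 y - 1) < phi x y}" using fin[OF x0 y] by simp
  ultimately have "\<exists>r>0. \<forall>x. dist x x0 < r \<longrightarrow> x \<in> {x. ereal (P x0 y - 1) < phi x y}"
    by (rule open_ball_ex)
  then obtain r where r: "r > 0" "\<forall>x. dist x x0 < r \<longrightarrow> ereal (P x0 y - 1) < phi x y"
    by auto
  have loc: "\<forall>x\<in>DX phi. dist x x0 < r \<longrightarrow> P x0 y - 1 < P x y"
  proof (intro ballI impI)
    fix x assume x: "x \<in> DX phi" "dist x x0 < r"
    hence "ereal (P x0 y - 1) < phi x y" using r(2) by blast
    thus "P x0 y - 1 < P x y" using fin[OF x(1) y] by simp
  qed
  have cur: "\<forall>x1\<in>DX phi. \<forall>t\<in>{0..1}. \<exists>w\<in>DX phi. dist w x0 \<le> t * dist x0 x1 \<and>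
        P w y \<le> (1-t)*P x0 y + t*P x1 y + t^2*(dist x0 x1)^2/(2*tau) - lam*t*(1-t)*(dist x0 x1)^2/2"
  proof (intro ballI)
    fix x1 t assume x1: "x1 \<in> DX phi" and t: "t \<in> {0..1::real}"
    obtain \<gamma> \<sigma> where c: "\<gamma> 0 = x0" "\<gamma> 1 = x1" "\<And>t. t \<in> {0..1} \<Longrightarrow> \<gamma> t \<in> DX phi"
      "\<And>t q y'. t \<in> {0..1} \<Longrightarrow> admissible_tau lam q \<Longrightarrow> y' \<in> DY phi \<Longrightarrow>
         Fb q x0 y (\<gamma> t) y' \<le> (1-t)*Fb q x0 y x0 y' + t*Fb q x0 y x1 y' - (1/q+lam)/2*t*(1-t)*(dist x0 x1)^2"
      "\<And>t. t \<in> {0..1} \<Longrightarrow> (dist (\<gamma> t) x0)^2 \<le> (1-t)*(dist x0 x0)^2 + t*(dist x1 x0)^2 - t*(1-t)*(dist x0 x1)^2"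
      by (rule curve[OF x0 x1 y y, where xb=x0 and yb=y], rule that, assumption+)
    define D where "D = dist x0 x1"
    have d1: "dist (\<gamma> t) x0 \<le> t*D"
      using c(5)[OF t] t unfolding D_def by (intro dist_from_sq) (auto simp: dist_commute)
    have "P (\<gamma> t) y + (dist (\<gamma> t) x0)^2/(2*tau) \<le> (1-t)*P x0 y + t*(P x1 y + D^2/(2*tau)) - (1/tau+lam)/2*t*(1-t)*D^2"
      using c(4)[OF t adm y] unfolding D_def by (simp add: Fb_def dist_commute diff_divide_distrib)
    moreover have "(dist (\<gamma> t) x0)^2/(2*tau) \<ge> 0" using tau_pos by simp
    moreover have "t*(P x1 y + D^2/(2*tau)) - (1/tau+lam)/2*t*(1-t)*D^2 = t*P x1 y + t^2*D^2/(2*tau) - lam*t*(1-t)*D^2/2"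
      using tau_pos by (simp add: field_simps power2_eq_square)
    ultimately have "P (\<gamma> t) y \<le> (1-t)*P x0 y + t*P x1 y + t^2*D^2/(2*tau) - lam*t*(1-t)*D^2/2" by linarith
    thus "\<exists>w\<in>DX phi. dist w x0 \<le> t * dist x0 x1 \<and>
        P w y \<le> (1-t)*P x0 y + t*P x1 y + t^2*(dist x0 x1)^2/(2*tau) - lam*t*(1-t)*(dist x0 x1)^2/2"
      using d1 c(3)[OF t] unfolding D_def by blast
  qed
  obtain B where B: "\<forall>x\<in>DX phi. B \<le> P x y + (dist x xb)^2/(2*tau)"
    using abstract_lb[OF x0 r(1) loc cur tau_pos mu_pos, of xb] by blast
  have "B - (dist y yb)^2/(2*tau) \<le> F x y" if "x \<in> DX phi" for x
    using B that by (simp add: F_def Fb_def diff_divide_distrib)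
  thus ?thesis by blast
qed

lemma ub_y:
  assumes x: "x \<in> DX phi"
  shows "\<exists>B. \<forall>y\<in>DY phi. F x y \<le> B"
proof -
  obtain xa y0 where y0: "y0 \<in> DY phi" using Dom_ne by blast
  have "open {y. phi x y < ereal (P x y0 + 1)}" using clo x by (auto simp: closed_fun_def usc_def)
  moreover have "y0 \<in> {y. phi x y < ereal (P x y0 + 1)}" using fin[OF x y0] by simp
  ultimately have "\<exists>r>0. \<forall>y. dist y y0 < r \<longrightarrow> y \<in> {y. phi x y < ereal (P x y0 + 1)}"
    by (rule open_ball_ex)
  then obtain r where r: "r > 0" "\<forall>y. dist y y0 < r \<longrightarrow> phi x y < ereal (P x y0 + 1)"
    by auto
  have loc: "\<forall>y\<in>DY phi. dist y y0 < r \<longrightarrow> (\<lambda>y. - P x y) y0 - 1 < (\<lambda>y. - P x y) y"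
  proof (intro ballI impI)
    fix y assume y: "y \<in> DY phi" "dist y y0 < r"
    hence "phi x y < ereal (P x y0 + 1)" using r(2) by blast
    thus "(\<lambda>y. - P x y) y0 - 1 < (\<lambda>y. - P x y) y" using fin[OF x y(1)] by simp
  qed
  have cur: "\<forall>y1\<in>DY phi. \<forall>t\<in>{0..1}. \<exists>w\<in>DY phi. dist w y0 \<le> t * dist y0 y1 \<and>
        (\<lambda>y. - P x y) w \<le> (1-t)*(\<lambda>y. - P x y) y0 + t*(\<lambda>y. - P x y) y1 + t^2*(dist y0 y1)^2/(2*tau) - lam*t*(1-t)*(dist y0 y1)^2/2"
  proof (intro ballI)
    fix y1 t assume y1: "y1 \<in> DY phi" and t: "t \<in> {0..1::real}"
    obtain \<gamma> \<sigma> where c: "\<sigma> 0 = y0" "\<sigma> 1 = y1" "\<And>t. t \<in> {0..1} \<Longrightarrow> \<sigma> t \<in> DY phi"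
      "\<And>t q x'. t \<in> {0..1} \<Longrightarrow> admissible_tau lam q \<Longrightarrow> x' \<in> DX phi \<Longrightarrow>
         Fb q x y0 x' (\<sigma> t) \<ge> (1-t)*Fb q x y0 x' y0 + t*Fb q x y0 x' y1 + (1/q+lam)/2*t*(1-t)*(dist y0 y1)^2"
      "\<And>t. t \<in> {0..1} \<Longrightarrow> (dist (\<sigma> t) y0)^2 \<le> (1-t)*(dist y0 y0)^2 + t*(dist y1 y0)^2 - t*(1-t)*(dist y0 y1)^2"
      by (rule curve[OF x x y0 y1, where xb=x and yb=y0], rule that, assumption+)
    define D where "D = dist y0 y1"
    have d1: "dist (\<sigma> t) y0 \<le> t*D"
      using c(5)[OF t] t unfolding D_def by (intro dist_from_sq) (auto simp: dist_commute)
    have "P x (\<sigma> t) - (dist (\<sigma> t) y0)^2/(2*tau) \<ge> (1-t)*P x y0 + t*(P x y1 - D^2/(2*tau)) + (1/tau+lam)/2*t*(1-t)*D^2"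
      using c(4)[OF t adm x] unfolding D_def by (simp add: Fb_def dist_commute diff_divide_distrib)
    moreover have "(dist (\<sigma> t) y0)^2/(2*tau) \<ge> 0" using tau_pos by simp
    moreover have "t*(P x y1 - D^2/(2*tau)) + (1/tau+lam)/2*t*(1-t)*D^2 = t*P x y1 - (t^2*D^2/(2*tau) - lam*t*(1-t)*D^2/2)"
      using tau_pos by (simp add: field_simps power2_eq_square)
    moreover have "(1-t)*(- P x y0) = - ((1-t)*P x y0)" "t*(- P x y1) = - (t*P x y1)" by simp_all
    ultimately have "- P x (\<sigma> t) \<le> (1-t)*(- P x y0) + t*(- P x y1) + t^2*D^2/(2*tau) - lam*t*(1-t)*D^2/2"
      by linarith
    thus "\<exists>w\<in>DY phi. dist w y0 \<le> t * dist y0 y1 \<and>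
        (\<lambda>y. - P x y) w \<le> (1-t)*(\<lambda>y. - P x y) y0 + t*(\<lambda>y. - P x y) y1 + t^2*(dist y0 y1)^2/(2*tau) - lam*t*(1-t)*(dist y0 y1)^2/2"
      using d1 c(3)[OF t] unfolding D_def by blast
  qed
  obtain B where B: "\<forall>y\<in>DY phi. B \<le> - P x y + (dist y yb)^2/(2*tau)"
    using abstract_lb[OF y0 r(1) loc cur tau_pos mu_pos, of yb] by auto
  have "F x y \<le> - B + (dist x xb)^2/(2*tau)" if "y \<in> DY phi" for y
  proof -
    have "B \<le> - P x y + (dist y yb)^2/(2*tau)" using B that by blast
    thus ?thesis by (simp add: F_def Fb_def diff_divide_distrib)
  qed
  thus ?thesis by blast
qed

end

context sp2 begin

lemma min_x:
  assumes y: "y \<in> DY phi"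
  shows "\<exists>m\<in>DX phi. \<forall>x\<in>DX phi. F m y \<le> F x y"
proof -
  obtain xa ya where xa: "xa \<in> DX phi" using Dom_ne by blast
  obtain B where B: "\<forall>x\<in>DX phi. B \<le> F x y" using lb_x[OF y] by blast
  show ?thesis
  proof (rule abstract_min[where G = "\<lambda>x. F x y" and B = B and mu = "1/tau+lam"])
    show "DX phi \<noteq> {}" using xa by blast
    show "\<exists>r>0. \<forall>x\<in>DX phi. dist x x0 < r \<longrightarrow> c < F x y" if "x0 \<in> DX phi \<Longrightarrow> c < F x0 y" for x0 c
      using lsc_x[OF y that] .
    show "B \<le> F x y" if "x \<in> DX phi" for x using B that by blast
    show "\<forall>x0\<in>DX phi. \<forall>x1\<in>DX phi. \<forall>t\<in>{0..1}. \<exists>w\<in>DX phi.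
        F w y \<le> (1-t)*F x0 y + t*F x1 y - (1/tau+lam)/2*t*(1-t)*(dist x0 x1)^2"
      using conv_x[OF y] .
    show "1/tau + lam > 0" using mu_pos .
  qed
qed

definition X :: "'y \<Rightarrow> 'x" where "X y = (SOME m. m \<in> DX phi \<and> (\<forall>x\<in>DX phi. F m y \<le> F x y))"
definition h :: "'y \<Rightarrow> real" where "h y = F (X y) y"

lemma X_props:
  assumes y: "y \<in> DY phi"
  shows "X y \<in> DX phi" "\<And>x. x \<in> DX phi \<Longrightarrow> h y \<le> F x y"
proof -
  have "X y \<in> DX phi \<and> (\<forall>x\<in>DX phi. F (X y) y \<le> F x y)"
  proof -
    have "\<exists>m. m \<in> DX phi \<and> (\<forall>x\<in>DX phi. F m y \<le> F x y)" using min_x[OF y] by blast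
    thus ?thesis unfolding X_def by (rule someI_ex)
  qed
  thus "X y \<in> DX phi" "\<And>x. x \<in> DX phi \<Longrightarrow> h y \<le> F x y" by (auto simp: h_def)
qed

lemma max_y: "\<exists>ys\<in>DY phi. \<forall>y\<in>DY phi. - h ys \<le> - h y"
proof -
  obtain xa ya where xa: "xa \<in> DX phi" and ya: "ya \<in> DY phi" using Dom_ne by blast
  obtain B where B: "\<forall>y\<in>DY phi. F xa y \<le> B" using ub_y[OF xa] by blast
  show ?thesis
  proof (rule abstract_min[where G = "\<lambda>y. - h y" and B = "-B" and mu = "1/tau+lam"])
    show "DY phi \<noteq> {}" using ya by blast
    show "\<exists>r>0. \<forall>y\<in>DY phi. dist y y0 < r \<longrightarrow> c < - h y" if hc: "y0 \<in> DY phi \<Longrightarrow> c < - h y0" for y0 c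
    proof -
      define x1 where "x1 = (if y0 \<in> DY phi then X y0 else xa)"
      have x1: "x1 \<in> DX phi" using X_props xa by (simp add: x1_def)
      have "y0 \<in> DY phi \<Longrightarrow> F x1 y0 < - c" using hc by (simp add: x1_def h_def)
      then obtain r where r: "r > 0" "\<forall>y\<in>DY phi. dist y y0 < r \<longrightarrow> F x1 y < - c"
        using usc_y[OF x1] by blast
      have "c < - h y" if "y \<in> DY phi" "dist y y0 < r" for y
        using r(2) that X_props(2)[OF that(1) x1] by force
      thus ?thesis using r(1) by blast
    qed
    show "- B \<le> - h y" if "y \<in> DY phi" for y using B that X_props(2)[OF that xa] by force
    show "\<forall>y0\<in>DY phi. \<forall>y1\<in>DY phi. \<forall>t\<in>{0..1}. \<exists>w\<in>DY phi.
        - h w \<le> (1-t)*(- h y0) + t*(- h y1) - (1/tau+lam)/2*t*(1-t)*(dist y0 y1)^2"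
    proof (intro ballI)
      fix y0 y1 t assume y0: "y0 \<in> DY phi" and y1: "y1 \<in> DY phi" and t: "t \<in> {0..1::real}"
      obtain \<gamma> \<sigma> where c: "\<sigma> 0 = y0" "\<sigma> 1 = y1" "\<And>t. t \<in> {0..1} \<Longrightarrow> \<sigma> t \<in> DY phi"
        "\<And>t q x'. t \<in> {0..1} \<Longrightarrow> admissible_tau lam q \<Longrightarrow> x' \<in> DX phi \<Longrightarrow>
           Fb q xb yb x' (\<sigma> t) \<ge> (1-t)*Fb q xb yb x' y0 + t*Fb q xb yb x' y1 + (1/q+lam)/2*t*(1-t)*(dist y0 y1)^2"
        by (rule curve[OF xa xa y0 y1, where xb=xb and yb=yb], rule that, assumption+)
      define w where "w = \<sigma> t"
      have w: "w \<in> DY phi" using c(3)[OF t] by (simp add: w_def)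
      have xw: "X w \<in> DX phi" using X_props(1)[OF w] .
      have "F (X w) w \<ge> (1-t)*F (X w) y0 + t*F (X w) y1 + (1/tau+lam)/2*t*(1-t)*(dist y0 y1)^2"
        using c(4)[OF t adm xw] by (simp add: Fb_tau w_def)
      moreover have "(1-t)*h y0 \<le> (1-t)*F (X w) y0" using X_props(2)[OF y0 xw] t by (intro mult_left_mono) auto
      moreover have "t*h y1 \<le> t*F (X w) y1" using X_props(2)[OF y1 xw] t by (intro mult_left_mono) auto
      moreover have "(1-t)*(- h y0) = - ((1-t)*h y0)" "t*(- h y1) = - (t*h y1)" by simp_all
      ultimately have "- h w \<le> (1-t)*(- h y0) + t*(- h y1) - (1/tau+lam)/2*t*(1-t)*(dist y0 y1)^2"
        unfolding h_def by linarith
      thus "\<exists>w\<in>DY phi. - h w \<le> (1-t)*(- h y0) + t*(- h y1) - (1/tau+lam)/2*t*(1-t)*(dist y0 y1)^2"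
        using w by blast
    qed
    show "1/tau + lam > 0" using mu_pos .
  qed
qed

end

context sp2 begin

lemma saddle_real:
  obtains xs ys where "xs \<in> DX phi" "ys \<in> DY phi" "\<forall>x\<in>DX phi. F xs ys \<le> F x ys"
    "\<forall>y\<in>DY phi. F xs y \<le> F xs ys"
proof -
  obtain ys where ys: "ys \<in> DY phi" and mx: "\<forall>y\<in>DY phi. h y \<le> h ys" using max_y by force
  define xs where "xs = X ys"
  have xs: "xs \<in> DX phi" using X_props(1)[OF ys] by (simp add: xs_def)
  have hx: "h ys = F xs ys" by (simp add: h_def xs_def)
  have minx: "\<forall>x\<in>DX phi. F xs ys \<le> F x ys" using X_props(2)[OF ys] hx by simp
  define mu where "mu = 1/tau + lam"
  have mu: "mu > 0" using mu_pos by (simp add: mu_def)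
  have "F xs y \<le> F xs ys" if y: "y \<in> DY phi" for y
  proof (rule field_le_epsilon)
    fix e :: real assume e: "e > 0"
    obtain r where r: "r > 0" "\<forall>x\<in>DX phi. dist x xs < r \<longrightarrow> F xs y - e < F x y"
      using lsc_x[OF y, of xs "F xs y - e"] e by auto
    define K where "K = h ys - h y"
    have K: "K \<ge> 0" using mx y by (simp add: K_def)
    define t where "t = min (1/2) (mu*r^2/(8*(K+1)))"
    have t1: "t \<le> 1/2" unfolding t_def by (rule min.cobounded1)
    have t2: "t \<le> mu*r^2/(8*(K+1))" unfolding t_def by (rule min.cobounded2)
    have "mu*r^2/(8*(K+1)) > 0" using mu r K by (intro divide_pos_pos) auto
    hence "t > 0" unfolding t_def by simp
    hence t: "t > 0" "t \<le> 1/2" "t \<le> mu*r^2/(8*(K+1))" using t1 t2 by auto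
    hence t01: "t \<in> {0..1}" by simp
    obtain \<gamma> \<sigma> where c: "\<sigma> 0 = ys" "\<sigma> 1 = y" "\<And>t. t \<in> {0..1} \<Longrightarrow> \<sigma> t \<in> DY phi"
      "\<And>t q x'. t \<in> {0..1} \<Longrightarrow> admissible_tau lam q \<Longrightarrow> x' \<in> DX phi \<Longrightarrow>
         Fb q xb yb x' (\<sigma> t) \<ge> (1-t)*Fb q xb yb x' ys + t*Fb q xb yb x' y + (1/q+lam)/2*t*(1-t)*(dist ys y)^2"
      by (rule curve[OF xs xs ys y, where xb=xb and yb=yb], rule that, assumption+)
    define w where "w = \<sigma> t"
    have w: "w \<in> DY phi" using c(3)[OF t01] by (simp add: w_def)
    define xt where "xt = X w"
    have xt: "xt \<in> DX phi" using X_props(1)[OF w] by (simp add: xt_def)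
    have H1: "F xt w \<ge> (1-t)*F xt ys + t*F xt y + mu/2*t*(1-t)*(dist ys y)^2"
      using c(4)[OF t01 adm xt] by (simp add: Fb_tau w_def mu_def)
    have "mu/2*t*(1-t)*(dist ys y)^2 \<ge> 0" using mu t by simp
    hence H1': "(1-t)*F xt ys + t*F xt y \<le> F xt w" using H1 by linarith
    have H2: "F xt w \<le> h ys" using mx w by (simp add: h_def xt_def)
    have H3: "h ys \<le> F xt ys" using X_props(2)[OF ys xt] .
    have H4: "h y \<le> F xt y" using X_props(2)[OF y xt] .
    have "(1-t)*h ys \<le> (1-t)*F xt ys" using H3 t by (intro mult_left_mono) auto
    hence "t*F xt y \<le> t*h ys" using H1' H2 by (simp add: algebra_simps)
    hence a: "F xt y \<le> h ys" using t by simp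
    define D where "D = (dist xs xt)^2"
    have qg: "F xs ys + mu/2*D \<le> F xt ys"
      unfolding D_def
      by (rule abstract_qgrowth[where G = "\<lambda>x. F x ys" and S = "DX phi", OF xs minx _ xt])
         (use conv_x[OF ys] in \<open>simp add: mu_def\<close>)
    have "(1-t)*(h ys + mu/2*D) \<le> (1-t)*F xt ys" using qg hx t by (intro mult_left_mono) auto
    moreover have "t*h y \<le> t*F xt y" using H4 t by (intro mult_left_mono) auto
    moreover have "(1-t)*(h ys + mu/2*D) = (1-t)*h ys + (1-t)*(mu/2*D)" by (simp add: algebra_simps)
    moreover have "(1-t)*h ys = h ys - t*h ys" by (simp add: algebra_simps)
    ultimately have "(1-t)*(mu/2*D) \<le> t*h ys - t*h y" using H1' H2 by linarith
    hence b: "(1-t)*(mu/2*D) \<le> t*K" by (simp add: K_def algebra_simps)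
    have D0: "mu/2*D \<ge> 0" using mu by (simp add: D_def)
    have "(1/2)*(mu/2*D) \<le> (1-t)*(mu/2*D)" using t D0 by (intro mult_right_mono) auto
    moreover have "(1/2)*(mu/2*D) = mu/4*D" by simp
    ultimately have c1: "mu/4*D \<le> t*K" using b by linarith
    have "t*K \<le> (mu*r^2/(8*(K+1)))*K" using t K by (intro mult_right_mono) auto
    also have "\<dots> = mu*r^2/8 * (K/(K+1))" using K by (simp add: field_simps)
    also have "\<dots> < mu*r^2/8"
    proof -
      have k1: "K/(K+1) < 1" using K by simp
      have m8: "mu*r^2/8 > 0" using mu r by simp
      show ?thesis using mult_strict_left_mono[OF k1 m8] by simp
    qed
    finally have "mu/4*D < mu*r^2/8" using c1 by linarith
    hence "D < r^2/2" using mu by (simp add: field_simps)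
    moreover have "D \<ge> 0" by (simp add: D_def)
    ultimately have "D < r^2" by linarith
    hence "(dist xt xs)^2 < r^2" unfolding D_def by (simp add: dist_commute)
    hence "dist xt xs < r" using r by (simp add: power_less_imp_less_base)
    hence "F xs y - e < F xt y" using r(2) xt by blast
    thus "F xs y \<le> F xs ys + e" using a hx by linarith
  qed
  thus ?thesis using that xs ys minx by blast
qed

lemma Phi_top: "phi x y = \<infinity> \<Longrightarrow> Phi phi tau xb yb x y = \<infinity>" by (simp add: Phi_def)
lemma Phi_bot: "phi x y = -\<infinity> \<Longrightarrow> Phi phi tau xb yb x y = -\<infinity>" by (simp add: Phi_def)
lemma Phi_top_rev: "Phi phi tau xb yb x y = \<infinity> \<Longrightarrow> phi x y = \<infinity>"
  by (cases "phi x y") (auto simp: Phi_def)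
lemma Phi_bot_rev: "Phi phi tau xb yb x y = -\<infinity> \<Longrightarrow> phi x y = -\<infinity>"
  by (cases "phi x y") (auto simp: Phi_def)

lemma saddle_dom:
  assumes s: "saddle_point (Phi phi tau xb yb) (a, b)"
  shows "a \<in> DX phi" "b \<in> DY phi" "\<forall>x\<in>DX phi. F a b \<le> F x b" "\<forall>y\<in>DY phi. F a y \<le> F a b"
proof -
  obtain xa ya where xa: "xa \<in> DX phi" and ya: "ya \<in> DY phi" using Dom_ne by blast
  have s1: "\<And>y. Phi phi tau xb yb a y \<le> Phi phi tau xb yb a b"
    and s2: "\<And>x. Phi phi tau xb yb a b \<le> Phi phi tau xb yb x b"
    using s by (auto simp: saddle_point_def)
  show a: "a \<in> DX phi"
  proof (rule ccontr)
    assume "a \<notin> DX phi"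
    hence "Phi phi tau xb yb a ya = \<infinity>" using notDX ya Phi_top by blast
    hence "Phi phi tau xb yb a b = \<infinity>" using s1[of ya] by simp
    hence "Phi phi tau xb yb xa b = \<infinity>" using s2[of xa] by simp
    hence "phi xa b = \<infinity>" by (rule Phi_top_rev)
    thus False using xa by (simp add: DX_def)
  qed
  show b: "b \<in> DY phi"
  proof (rule ccontr)
    assume "b \<notin> DY phi"
    hence "Phi phi tau xb yb xa b = -\<infinity>" using notDY xa Phi_bot by blast
    hence "Phi phi tau xb yb a b = -\<infinity>" using s2[of xa] by simp
    hence "Phi phi tau xb yb a ya = -\<infinity>" using s1[of ya] by simp
    hence "phi a ya = -\<infinity>" by (rule Phi_bot_rev)
    thus False using ya by (simp add: DY_def)
  qed
  show "\<forall>x\<in>DX phi. F a b \<le> F x b"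
  proof
    fix x assume x: "x \<in> DX phi"
    have "Phi phi tau xb yb a b \<le> Phi phi tau xb yb x b" by (rule s2)
    thus "F a b \<le> F x b" using a b x by (simp add: Phi_real F_def)
  qed
  show "\<forall>y\<in>DY phi. F a y \<le> F a b"
  proof
    fix y assume y: "y \<in> DY phi"
    have "Phi phi tau xb yb a y \<le> Phi phi tau xb yb a b" by (rule s1)
    thus "F a y \<le> F a b" using a b y by (simp add: Phi_real F_def)
  qed
qed

lemma real_saddle_is_saddle:
  assumes "a \<in> DX phi" "b \<in> DY phi" "\<forall>x\<in>DX phi. F a b \<le> F x b" "\<forall>y\<in>DY phi. F a y \<le> F a b"
  shows "saddle_point (Phi phi tau xb yb) (a, b)"
  unfolding saddle_point_def
proof (intro allI conjI)
  fix x y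
  show "Phi phi tau xb yb (fst (a, b)) y \<le> Phi phi tau xb yb (fst (a, b)) (snd (a, b))"
  proof (cases "y \<in> DY phi")
    case True thus ?thesis using assms by (simp add: Phi_real F_def)
  next
    case False thus ?thesis using assms notDY Phi_bot by simp
  qed
  show "Phi phi tau xb yb (fst (a, b)) (snd (a, b)) \<le> Phi phi tau xb yb x (snd (a, b))"
  proof (cases "x \<in> DX phi")
    case True thus ?thesis using assms by (simp add: Phi_real F_def)
  next
    case False thus ?thesis using assms notDX Phi_top by simp
  qed
qed

lemma real_saddle_unique:
  assumes p: "a \<in> DX phi" "b \<in> DY phi" "\<forall>x\<in>DX phi. F a b \<le> F x b" "\<forall>y\<in>DY phi. F a y \<le> F a b"
    and q: "c \<in> DX phi" "d \<in> DY phi" "\<forall>x\<in>DX phi. F c d \<le> F x d" "\<forall>y\<in>DY phi. F c y \<le> F c d"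
  shows "a = c \<and> b = d"
proof -
  have e1: "F a d \<le> F a b" "F a b \<le> F c b" "F c b \<le> F c d" "F c d \<le> F a d" using p q by auto
  have g1: "F a b + (1/tau+lam)/2*(dist a c)^2 \<le> F c b"
    by (rule abstract_qgrowth[where G = "\<lambda>x. F x b" and S = "DX phi", OF p(1) p(3) conv_x[OF p(2)] q(1)])
  have g2: "- F a b + (1/tau+lam)/2*(dist b d)^2 \<le> - F a d"
    by (rule abstract_qgrowth[where G = "\<lambda>y. - F a y" and S = "DY phi", OF p(2) _ conc_y[OF p(1)] q(2)])
       (use p(4) in auto)
  have "(1/tau+lam)/2*(dist a c)^2 \<le> 0" using g1 e1 by linarith
  hence "(dist a c)^2 \<le> 0" using mu_pos by (simp add: mult_le_0_iff)
  hence "a = c" by simp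
  moreover have "(1/tau+lam)/2*(dist b d)^2 \<le> 0" using g2 e1 by linarith
  hence "(dist b d)^2 \<le> 0" using mu_pos by (simp add: mult_le_0_iff)
  hence "b = d" by simp
  ultimately show ?thesis by simp
qed

lemma J_props:
  defines "p \<equiv> J phi tau (xb, yb)"
  shows "fst p \<in> DX phi" "snd p \<in> DY phi" "\<forall>x\<in>DX phi. F (fst p) (snd p) \<le> F x (snd p)"
    "\<forall>y\<in>DY phi. F (fst p) y \<le> F (fst p) (snd p)"
proof -
  obtain xs ys where r: "xs \<in> DX phi" "ys \<in> DY phi" "\<forall>x\<in>DX phi. F xs ys \<le> F x ys"
    "\<forall>y\<in>DY phi. F xs y \<le> F xs ys" by (rule saddle_real)
  have "J phi tau (xb, yb) = (xs, ys)"
    unfolding J_def fst_conv snd_conv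
  proof (rule the_equality)
    show "saddle_point (Phi phi tau xb yb) (xs, ys)" using real_saddle_is_saddle[OF r] .
    fix pp assume "saddle_point (Phi phi tau xb yb) pp"
    moreover obtain a b where "pp = (a, b)" by fastforce
    ultimately have "saddle_point (Phi phi tau xb yb) (a, b)" by simp
    from saddle_dom[OF this] have "a = xs \<and> b = ys" using real_saddle_unique r by blast
    thus "pp = (xs, ys)" using \<open>pp = (a, b)\<close> by simp
  qed
  thus "fst p \<in> DX phi" "snd p \<in> DY phi" "\<forall>x\<in>DX phi. F (fst p) (snd p) \<le> F x (snd p)"
    "\<forall>y\<in>DY phi. F (fst p) y \<le> F (fst p) (snd p)" using r by (simp_all add: p_def)
qed

end

lemma slope_nonneg: "0 \<le> slope phi w"
proof -
  have f0: "0 \<le> max (phi (fst w) (snd z') - phi (fst z') (snd w)) 0 / ereal (dist z' w)" for z'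
    by (simp add: divide_ereal_def ereal_inverse_nonneg_iff)
  show ?thesis
  proof (cases "w \<notin> Dom phi \<or> \<not> w islimpt Dom phi")
    case True thus ?thesis by (auto simp: slope_def)
  next
    case False
    hence "at w within Dom phi \<noteq> bot" using trivial_limit_within by blast
    hence "0 \<le> Limsup (at w within Dom phi)
             (\<lambda>z'. max (phi (fst w) (snd z') - phi (fst z') (snd w)) 0 / ereal (dist z' w))"
      using f0 by (intro le_Limsup) auto
    thus ?thesis using False by (simp add: slope_def)
  qed
qed

lemma cs_ineq:
  fixes A B ex ey :: real
  shows "A*ex + B*ey \<le> sqrt (A^2+B^2) * sqrt (ex^2+ey^2)"
proof -
  have "(A*ex + B*ey)^2 + (A*ey - B*ex)^2 = (A^2+B^2)*(ex^2+ey^2)" by (simp add: power2_eq_square algebra_simps)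
  hence "(A*ex + B*ey)^2 \<le> (A^2+B^2)*(ex^2+ey^2)" by (metis le_add_same_cancel1 zero_le_power2)
  hence "A*ex + B*ey \<le> sqrt ((A^2+B^2)*(ex^2+ey^2))" by (rule real_le_rsqrt)
  thus ?thesis by (simp add: real_sqrt_mult)
qed

context sp2 begin

lemma slope_J: "slope phi (J phi tau (xb, yb)) \<le> ereal (dist (J phi tau (xb, yb)) (xb, yb) / tau)"
proof -
  obtain a b where ab: "J phi tau (xb, yb) = (a, b)" by fastforce
  have a: "a \<in> DX phi" and b: "b \<in> DY phi" and s1: "\<forall>x\<in>DX phi. F a b \<le> F x b"
    and s2: "\<forall>y\<in>DY phi. F a y \<le> F a b" using J_props ab by (metis fst_conv snd_conv)+
  define A where "A = dist a xb"
  define B where "B = dist b yb"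
  define Dd where "Dd = dist (a, b) (xb, yb)"
  have Dd: "Dd = sqrt (A^2 + B^2)" by (simp add: Dd_def A_def B_def dist_Pair_Pair)
  have Dd0: "Dd \<ge> 0" by (simp add: Dd_def)
  have tau: "tau > 0" using tau_pos .
  let ?f = "\<lambda>z'. max (phi a (snd z') - phi (fst z') b) 0 / ereal (dist z' (a, b))"
  let ?g = "\<lambda>z'. ereal ((Dd + dist z' (a, b)/2)/tau)"
  have pw: "?f z' \<le> ?g z'" if z': "z' \<in> Dom phi" "z' \<noteq> (a, b)" for z'
  proof -
    obtain x' y' where z'e: "z' = (x', y')" by fastforce
    have x': "x' \<in> DX phi" and y': "y' \<in> DY phi" using z' z'e by (auto simp: Dom_def)
    define ex where "ex = dist x' a"
    define ey where "ey = dist y' b"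
    define rho where "rho = dist z' (a, b)"
    have rho: "rho = sqrt (ex^2 + ey^2)" by (simp add: rho_def ex_def ey_def z'e dist_Pair_Pair)
    have rho0: "rho > 0" using z' by (simp add: rho_def)
    have rho2: "rho^2 = ex^2 + ey^2" using rho by simp
    define u where "u = P a y' - P x' b"
    have "F a y' \<le> F x' b" using s1 s2 x' y' by force
    hence "P a y' + (A^2 - (dist y' yb)^2)/(2*tau) \<le> P x' b + ((dist x' xb)^2 - B^2)/(2*tau)"
      by (simp add: F_def Fb_def A_def B_def)
    moreover have "((dist x' xb)^2 - B^2)/(2*tau) - (A^2 - (dist y' yb)^2)/(2*tau)
        = ((dist x' xb)^2 - A^2 + (dist y' yb)^2 - B^2)/(2*tau)" using tau by (simp add: field_simps)
    ultimately have u1: "u \<le> ((dist x' xb)^2 - A^2 + (dist y' yb)^2 - B^2)/(2*tau)" unfolding u_def by linarith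
    have "dist x' xb \<le> ex + A" unfolding ex_def A_def by (rule dist_triangle)
    hence "(dist x' xb)^2 \<le> (ex + A)^2" by (simp add: power_mono)
    moreover have "dist y' yb \<le> ey + B" unfolding ey_def B_def by (rule dist_triangle)
    hence "(dist y' yb)^2 \<le> (ey + B)^2" by (simp add: power_mono)
    moreover have "(ex + A)^2 = A^2 + 2*(A*ex) + ex^2" "(ey + B)^2 = B^2 + 2*(B*ey) + ey^2"
      by (simp_all add: power2_eq_square algebra_simps)
    moreover have "A*ex + B*ey \<le> Dd * rho" using cs_ineq[of A ex B ey] Dd rho by simp
    ultimately have "(dist x' xb)^2 - A^2 + (dist y' yb)^2 - B^2 \<le> 2*(Dd*rho) + rho^2" using rho2 by linarith
    hence "((dist x' xb)^2 - A^2 + (dist y' yb)^2 - B^2)/(2*tau) \<le> (2*(Dd*rho) + rho^2)/(2*tau)"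
      using tau by (intro divide_right_mono) auto
    also have "\<dots> = rho * ((Dd + rho/2)/tau)" using tau by (simp add: field_simps power2_eq_square)
    finally have "u \<le> rho * ((Dd + rho/2)/tau)" using u1 by linarith
    moreover have "0 \<le> rho * ((Dd + rho/2)/tau)" using rho0 Dd0 tau by simp
    ultimately have "max u 0 \<le> rho * ((Dd + rho/2)/tau)" by simp
    hence m: "max u 0 / rho \<le> (Dd + rho/2)/tau" using rho0 by (simp add: pos_divide_le_eq mult.commute)
    have e1: "max (phi a y' - phi x' b) 0 = ereal (max u 0)"
      using fin[OF a y'] fin[OF x' b] by (simp add: u_def zero_ereal_def)
    have e2: "ereal (max u 0) / ereal rho = ereal (max u 0 / rho)" using rho0 by (simp del: ereal_max)
    have "?f z' = ereal (max u 0 / rho)"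
      unfolding z'e fst_conv snd_conv e1 using e2 by (simp add: rho_def z'e del: ereal_max)
    thus ?thesis using m by (simp add: rho_def)
  qed
  show ?thesis
  proof (cases "(a, b) islimpt Dom phi")
    case False
    thus ?thesis using ab a b Dd0 tau by (simp add: slope_def Dom_def Dd_def)
  next
    case True
    have nb: "at (a, b) within Dom phi \<noteq> bot" using True trivial_limit_within by blast
    have ev: "eventually (\<lambda>z'. ?f z' \<le> ?g z') (at (a, b) within Dom phi)"
      unfolding eventually_at using pw by (intro exI[of _ 1]) auto
    have "((\<lambda>z'. (Dd + dist z' (a, b)/2)/tau) \<longlongrightarrow> (Dd + dist (a, b) (a, b)/2)/tau) (at (a, b) within Dom phi)"
      using tau by (intro tendsto_intros) auto
    hence "(?g \<longlongrightarrow> ereal (Dd/tau)) (at (a, b) within Dom phi)" by simp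
    hence lg: "Limsup (at (a, b) within Dom phi) ?g = ereal (Dd/tau)" using nb by (intro lim_imp_Limsup) auto
    have "slope phi (a, b) = Limsup (at (a, b) within Dom phi) ?f" using True a b by (simp add: slope_def Dom_def)
    also have "\<dots> \<le> Limsup (at (a, b) within Dom phi) ?g" using ev by (rule Limsup_mono)
    finally show ?thesis using lg ab by (simp add: Dd_def)
  qed
qed

end

context sp2 begin

lemma slope_base:
  assumes z: "(xb, yb) \<in> Dom phi" and pos: "dist (J phi tau (xb, yb)) (xb, yb) > 0"
  shows "ereal ((1/tau+lam) * dist (J phi tau (xb, yb)) (xb, yb)) \<le> slope phi (xb, yb)"
proof -
  obtain a b where ab: "J phi tau (xb, yb) = (a, b)" by fastforce
  have a: "a \<in> DX phi" and b: "b \<in> DY phi" and s1: "\<forall>x\<in>DX phi. F a b \<le> F x b"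
    and s2: "\<forall>y\<in>DY phi. F a y \<le> F a b" using J_props ab by (metis fst_conv snd_conv)+
  have xb: "xb \<in> DX phi" and yb: "yb \<in> DY phi" using z by (auto simp: Dom_def)
  define mu where "mu = 1/tau + lam"
  have mu: "mu > 0" using mu_pos by (simp add: mu_def)
  have tau: "tau > 0" using tau_pos .
  define A where "A = dist xb a"
  define B where "B = dist yb b"
  define Dd where "Dd = dist (a, b) (xb, yb)"
  have Dd: "Dd = sqrt (A^2 + B^2)" by (simp add: Dd_def A_def B_def dist_Pair_Pair dist_commute)
  have Dd2: "Dd^2 = A^2 + B^2" using Dd by simp
  have Dpos: "Dd > 0" using pos ab by (simp add: Dd_def)
  have g1: "F a b + mu/2*(dist a xb)^2 \<le> F xb b"
    unfolding mu_def
    by (rule abstract_qgrowth[where G = "\<lambda>x. F x b" and S = "DX phi", OF a s1 conv_x[OF b] xb])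
  have g2: "- F a b + mu/2*(dist b yb)^2 \<le> - F a yb"
    unfolding mu_def
    by (rule abstract_qgrowth[where G = "\<lambda>y. - F a y" and S = "DY phi", OF b _ conc_y[OF a] yb])
       (use s2 in auto)
  have E: "F xb b - F a yb \<ge> mu/2*Dd^2"
  proof -
    have "mu/2*Dd^2 = mu/2*(dist a xb)^2 + mu/2*(dist b yb)^2"
      using Dd2 by (simp add: A_def B_def dist_commute algebra_simps)
    thus ?thesis using g1 g2 by linarith
  qed
  obtain \<gamma> \<sigma> where c: "\<gamma> 0 = xb" "\<gamma> 1 = a" "\<sigma> 0 = yb" "\<sigma> 1 = b"
    "\<And>t. t \<in> {0..1} \<Longrightarrow> \<gamma> t \<in> DX phi" "\<And>t. t \<in> {0..1} \<Longrightarrow> \<sigma> t \<in> DY phi"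
    "\<And>t q y. t \<in> {0..1} \<Longrightarrow> admissible_tau lam q \<Longrightarrow> y \<in> DY phi \<Longrightarrow>
       Fb q xb yb (\<gamma> t) y \<le> (1-t)*Fb q xb yb xb y + t*Fb q xb yb a y - (1/q+lam)/2*t*(1-t)*(dist xb a)^2"
    "\<And>t q x. t \<in> {0..1} \<Longrightarrow> admissible_tau lam q \<Longrightarrow> x \<in> DX phi \<Longrightarrow>
       Fb q xb yb x (\<sigma> t) \<ge> (1-t)*Fb q xb yb x yb + t*Fb q xb yb x b + (1/q+lam)/2*t*(1-t)*(dist yb b)^2"
    "\<And>t. t \<in> {0..1} \<Longrightarrow> (dist (\<gamma> t) xb)^2 \<le> (1-t)*(dist xb xb)^2 + t*(dist a xb)^2 - t*(1-t)*(dist xb a)^2"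
    "\<And>t. t \<in> {0..1} \<Longrightarrow> (dist (\<sigma> t) yb)^2 \<le> (1-t)*(dist yb yb)^2 + t*(dist b yb)^2 - t*(1-t)*(dist yb b)^2"
    by (rule curve[OF xb a yb b, where xb=xb and yb=yb], rule that, assumption+)
  let ?f = "\<lambda>w. max (phi xb (snd w) - phi (fst w) yb) 0 / ereal (dist w (xb, yb))"
  have zs: "\<exists>w\<in>Dom phi. w \<noteq> (xb, yb) \<and> dist w (xb, yb) \<le> kk*Dd \<and> ereal (mu*Dd*(1-kk/2)) \<le> ?f w"
    if kk: "0 < kk" "kk \<le> 1" for kk
  proof -
    have s01: "kk \<in> {0..1}" using kk by simp
    define g where "g = \<gamma> kk"
    define sg where "sg = \<sigma> kk"
    have g: "g \<in> DX phi" and sg: "sg \<in> DY phi" using c(5,6)[OF s01] by (simp_all add: g_def sg_def)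
    have r1: "F g yb \<le> (1-kk)*F xb yb + kk*F a yb - mu/2*kk*(1-kk)*A^2"
      using c(7)[OF s01 adm yb] by (simp add: Fb_tau g_def mu_def A_def)
    have r2: "F xb sg \<ge> (1-kk)*F xb yb + kk*F xb b + mu/2*kk*(1-kk)*B^2"
      using c(8)[OF s01 adm xb] by (simp add: Fb_tau sg_def mu_def B_def)
    have f1: "P g yb \<le> F g yb" using tau by (simp add: F_def Fb_def)
    have f2: "F xb sg \<le> P xb sg" using tau by (simp add: F_def Fb_def)
    have sE: "kk*(F xb b - F a yb) \<ge> kk*(mu/2*Dd^2)" using E kk by (intro mult_left_mono) auto
    have eqs: "mu/2*kk*(1-kk)*A^2 + mu/2*kk*(1-kk)*B^2 = mu/2*kk*(1-kk)*Dd^2" using Dd2 by (simp add: field_simps)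
    have eqs2: "kk*(F xb b - F a yb) = kk*F xb b - kk*F a yb" by (simp add: algebra_simps)
    define diff where "diff = P xb sg - P g yb"
    have dlow: "diff \<ge> mu*Dd^2*kk*(1-kk/2)"
    proof -
      have "diff \<ge> kk*(mu/2*Dd^2) + mu/2*kk*(1-kk)*Dd^2"
        using r1 r2 f1 f2 sE eqs eqs2 unfolding diff_def by linarith
      moreover have "kk*(mu/2*Dd^2) + mu/2*kk*(1-kk)*Dd^2 = mu*Dd^2*kk*(1-kk/2)" by (simp add: field_simps)
      ultimately show ?thesis by linarith
    qed
    have lpos: "mu*Dd^2*kk*(1-kk/2) > 0" using mu Dpos kk by simp
    have dg: "dist g xb \<le> kk*A"
      using c(9)[OF s01] kk unfolding A_def g_def by (intro dist_from_sq) (auto simp: dist_commute)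
    have dsg: "dist sg yb \<le> kk*B"
      using c(10)[OF s01] kk unfolding B_def sg_def by (intro dist_from_sq) (auto simp: dist_commute)
    have dw: "dist (g, sg) (xb, yb) \<le> kk*Dd"
    proof -
      have "(dist g xb)^2 \<le> (kk*A)^2" using dg by (simp add: power_mono)
      moreover have "(dist sg yb)^2 \<le> (kk*B)^2" using dsg by (simp add: power_mono)
      ultimately have "(dist g xb)^2 + (dist sg yb)^2 \<le> (kk*Dd)^2" using Dd2 by (simp add: power_mult_distrib algebra_simps)
      hence "sqrt ((dist g xb)^2 + (dist sg yb)^2) \<le> sqrt ((kk*Dd)^2)" by (rule real_sqrt_le_mono)
      thus ?thesis using kk Dpos by (simp add: dist_Pair_Pair)
    qed
    have ne: "(g, sg) \<noteq> (xb, yb)"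
    proof
      assume "(g, sg) = (xb, yb)"
      hence "diff = 0" by (simp add: diff_def)
      thus False using dlow lpos by linarith
    qed
    define rho where "rho = dist (g, sg) (xb, yb)"
    have rho: "rho > 0" "rho \<le> kk*Dd" using ne dw by (auto simp: rho_def)
    have dpos: "diff > 0" using dlow lpos by linarith
    have "mu*Dd*(1-kk/2) = (mu*Dd^2*kk*(1-kk/2))/(kk*Dd)" using kk Dpos by (simp add: field_simps power2_eq_square)
    also have "\<dots> \<le> diff/(kk*Dd)" using dlow kk Dpos by (intro divide_right_mono) auto
    also have "\<dots> \<le> diff/rho" using rho dpos by (intro divide_left_mono) auto
    finally have rat: "mu*Dd*(1-kk/2) \<le> diff/rho" .
    have e1: "max (phi xb sg - phi g yb) 0 = ereal (max diff 0)"
      using fin[OF xb sg] fin[OF g yb] by (simp add: diff_def zero_ereal_def)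
    have e2: "ereal (max diff 0) / ereal rho = ereal (max diff 0 / rho)" using rho by (simp del: ereal_max)
    have "?f (g, sg) = ereal (diff / rho)"
      unfolding fst_conv snd_conv e1 using e2 dpos by (simp add: rho_def del: ereal_max)
    hence "ereal (mu*Dd*(1-kk/2)) \<le> ?f (g, sg)" using rat by simp
    moreover have "(g, sg) \<in> Dom phi" using g sg by (simp add: Dom_def)
    ultimately show ?thesis using ne dw by blast
  qed
  have lim: "(xb, yb) islimpt Dom phi"
    unfolding islimpt_approachable
  proof (intro allI impI)
    fix e :: real assume e: "e > 0"
    define kk where "kk = min 1 (e/(2*Dd))"
    have kk: "0 < kk" "kk \<le> 1" "kk*Dd \<le> e/2" using e Dpos by (auto simp: kk_def min_def field_simps)
    obtain w where "w \<in> Dom phi" "w \<noteq> (xb, yb)" "dist w (xb, yb) \<le> kk*Dd" using zs[OF kk(1,2)] by blast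
    thus "\<exists>x'\<in>Dom phi. x' \<noteq> (xb, yb) \<and> dist x' (xb, yb) < e" using kk e by force
  qed
  have "ereal (mu*Dd) \<le> Limsup (at (xb, yb) within Dom phi) ?f"
  proof (rule Limsup_greatest)
    fix Q assume "eventually Q (at (xb, yb) within Dom phi)"
    then obtain d where d: "d > 0" "\<forall>w\<in>Dom phi. w \<noteq> (xb, yb) \<and> dist w (xb, yb) < d \<longrightarrow> Q w"
      unfolding eventually_at by blast
    show "ereal (mu*Dd) \<le> (SUP w\<in>Collect Q. ?f w)"
    proof (rule ereal_le_epsilon2)
      fix e :: real assume e: "e > 0"
      define kk where "kk = min 1 (min (d/(2*Dd)) (e/(mu*Dd)))"
      have k1: "kk \<le> 1" "kk \<le> d/(2*Dd)" "kk \<le> e/(mu*Dd)" unfolding kk_def by auto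
      have k0: "0 < kk" unfolding kk_def using e d Dpos mu by simp
      have "kk*Dd \<le> d/(2*Dd)*Dd" using k1(2) Dpos by (intro mult_right_mono) auto
      also have "\<dots> = d/2" using Dpos by simp
      finally have k2: "kk*Dd \<le> d/2" .
      have "kk*(mu*Dd) \<le> e/(mu*Dd)*(mu*Dd)" using k1(3) Dpos mu by (intro mult_right_mono) auto
      also have "\<dots> = e" using Dpos mu by simp
      finally have k3: "kk*(mu*Dd) \<le> e" .
      have kk: "0 < kk" "kk \<le> 1" "kk*Dd \<le> d/2" "kk*(mu*Dd) \<le> e" using k0 k1 k2 k3 by auto
      obtain w where w: "w \<in> Dom phi" "w \<noteq> (xb, yb)" "dist w (xb, yb) \<le> kk*Dd"
        "ereal (mu*Dd*(1-kk/2)) \<le> ?f w" using zs[OF kk(1,2)] by blast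
      have "Q w" using d w kk by force
      hence "?f w \<le> (SUP w\<in>Collect Q. ?f w)" by (intro SUP_upper) auto
      moreover have "mu*Dd - e \<le> mu*Dd*(1-kk/2)"
      proof -
        have "mu*Dd*(1-kk/2) = mu*Dd - (kk*(mu*Dd))/2" by (simp add: algebra_simps)
        thus ?thesis using kk(4) e by linarith
      qed
      ultimately have "ereal (mu*Dd - e) \<le> (SUP w\<in>Collect Q. ?f w)" using w(4) by (meson ereal_less_eq(3) order_trans)
      hence "ereal (mu*Dd - e) + ereal e \<le> (SUP w\<in>Collect Q. ?f w) + ereal e" by (rule add_right_mono)
      thus "ereal (mu*Dd) \<le> (SUP w\<in>Collect Q. ?f w) + ereal e" by simp
    qed
  qed
  moreover have "slope phi (xb, yb) = Limsup (at (xb, yb) within Dom phi) ?f"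
    using z lim by (simp add: slope_def)
  ultimately show ?thesis using ab by (simp add: mu_def Dd_def)
qed

end

lemma aux_cancel: "c \<noteq> 0 \<Longrightarrow> t \<noteq> 0 \<Longrightarrow> 1/c * (c/t * D) = D/(t::real)"
  by (simp add: field_simps)

theorem mainTheorem12:
  fixes phi :: "'x::complete_space \<Rightarrow> 'y::complete_space \<Rightarrow> ereal"
    and lam tau :: real and z :: "'x \<times> 'y"
  assumes "proper_fun phi" and "closed_fun phi" and "A1 phi" and "A2 phi lam"
    and "admissible_tau lam tau"
  shows "slope phi (J phi tau z) \<le> ereal (dist (J phi tau z) z / tau) \<and>
         ereal (dist (J phi tau z) z / tau) \<le> ereal (1 / (1 + lam * tau)) * slope phi z \<and>
         J phi tau z \<in> dom_slope phi"
proof -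
  interpret sp2 phi lam tau "fst z" "snd z"
    by unfold_locales (rule assms)+
  have zz: "(fst z, snd z) = z" by simp
  have tau: "tau > 0" and lt: "1 + lam*tau > 0" using adm_props[OF assms(5)] by auto
  have p1: "slope phi (J phi tau z) \<le> ereal (dist (J phi tau z) z / tau)"
    using slope_J unfolding zz .
  have p2: "ereal (dist (J phi tau z) z / tau) \<le> ereal (1 / (1 + lam * tau)) * slope phi z"
  proof (cases "z \<in> Dom phi")
    case False
    hence "slope phi z = \<infinity>" by (simp add: slope_def)
    thus ?thesis using lt by simp
  next
    case True
    show ?thesis
    proof (cases "dist (J phi tau z) z = 0")
      case True
      have "0 \<le> ereal (1 / (1 + lam * tau)) * slope phi z"
        using lt slope_nonneg[of phi z] by (intro ereal_0_le_mult) auto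
      thus ?thesis using True by (simp add: zero_ereal_def)
    next
      case False
      hence pos: "dist (J phi tau z) z > 0" by simp
      have "ereal ((1/tau+lam) * dist (J phi tau z) z) \<le> slope phi z"
        using slope_base[unfolded zz, OF \<open>z \<in> Dom phi\<close> pos] .
      hence "ereal (1 / (1 + lam * tau)) * ereal ((1/tau+lam) * dist (J phi tau z) z)
          \<le> ereal (1 / (1 + lam * tau)) * slope phi z"
        using lt by (intro ereal_mult_left_mono) auto
      moreover have "1 / (1 + lam * tau) * ((1/tau+lam) * dist (J phi tau z) z) = dist (J phi tau z) z / tau"
      proof -
        have "1/tau+lam = (1+lam*tau)/tau" using tau by (simp add: field_simps)
        moreover have "1/(1+lam*tau) * ((1+lam*tau)/tau * dist (J phi tau z) z) = dist (J phi tau z) z / tau"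
          using aux_cancel[of "1+lam*tau" tau "dist (J phi tau z) z"] lt tau by simp
        ultimately show ?thesis by simp
      qed
      ultimately show ?thesis by simp
    qed
  qed
  have "fst (J phi tau z) \<in> DX phi" "snd (J phi tau z) \<in> DY phi" using J_props(1,2) unfolding zz by auto
  hence "J phi tau z \<in> Dom phi" unfolding Dom_def by (simp add: mem_Times_iff)
  moreover have "slope phi (J phi tau z) < \<infinity>" using order.strict_trans1[OF p1, of "\<infinity>"] by simp
  ultimately have p3: "J phi tau z \<in> dom_slope phi" by (simp add: dom_slope_def)
  show ?thesis using p1 p2 p3 by blast
qed


end
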